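(* Let $Q$ be a connected quiver of rank $3$ with at least one frozen vertex whose mutable part $Q^{\mathrm{mut}}$ is mutation-abundant, and let $\mathbf M$ be an infinite mutation sequence which is reduced, weakly balanced, and cycle-preserving on $Q^{\mathrm{mut}}$. Then $Q$ is eventually sign-coherent on $\mathbf M$: there is $T$ such that $Q^{(j)}_{\mathbf M}$ is sign-coherent for all $j>T$.
   Context: A quiver is a finite directed multigraph with no loops and no oriented 2-cycles, whose vertex set is partitioned into mutable and frozen vertices; arrows between two frozen vertices are ignored. $Q^{\mathrm{mut}}$ is the subquiver on the mutable vertices and $Q|_S$ the induced subquiver on $S$. Mutation $\mu_j$ at mutable $j$: for each path $i\to j\to k$ with $a$ arrows $i\to j$ and $b$ arrows $j\to k$ add $ab$ arrows $i\to k$, reverse all arrows at $j$, cancel 2-cycles. A mutation sequence $\mathbf M=m_1m_2\cdots$ has $Q^{(0)}_{\mathbf M}=Q$, $Q^{(i)}_{\mathbf M}=\mu_{m_i}(Q^{(i-1)}_{\mathbf M})$; it is reduced if $m_i\ne m_{i+1}$, weakly balanced if every mutable vertex occurs infinitely often. Connected: the mutable part is connected as an undirected graph and every frozen vertex is adjacent to some mutable vertex. A quiver without frozen vertices is mutation-abundant if every quiver mutation-equivalent to it has at least 2 arrows between every pair of vertices. A 3-vertex (sub)quiver is an oriented 3-cycle if it has at most one frozen vertex and its underlying directed graph is not acyclic. A mutable vertex $j$ is cycle-preserving for $Q$ if whenever $Q|_{\{i,j,k\}}$ is an oriented 3-cycle containing $j$, so is $\mu_j(Q)|_{\{i,j,k\}}$;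 $\mathbf M$ is cycle-preserving on $Q^{\mathrm{mut}}$ if each $m_\ell$ is cycle-preserving for $(Q^{(\ell-1)}_{\mathbf M})^{\mathrm{mut}}$. A mutable vertex adjacent to at least one frozen vertex is red (resp. green) if all arrows between it and frozen vertices point towards (resp. away from) it; a quiver is sign-coherent if every mutable vertex is red or green. *)

theory Defs
  imports Main
begin

text \<open>A quiver is encoded by a finite vertex set V, a set Mu of mutable vertices
(the frozen vertices are V - Mu), and an integer function B with
B i j = (number of arrows i to j) - (number of arrows j to i).  Since quivers have no
loops and no oriented 2-cycles, B determines the quiver: there are nat (B i j) arrows
from i to j.  Entries between two frozen vertices are irrelevant (ignored).\<close>

definition is_quiver :: "'v set \<Rightarrow> 'v set \<Rightarrow> ('v \<Rightarrow> 'v \<Rightarrow> int) \<Rightarrow> bool" where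
  "is_quiver V Mu B \<longleftrightarrow> finite V \<and> Mu \<subseteq> V \<and> (\<forall>i j. B i j = - B j i)
     \<and> (\<forall>i j. i \<notin> V \<or> j \<notin> V \<longrightarrow> B i j = 0)"

definition arrows :: "('v \<Rightarrow> 'v \<Rightarrow> int) \<Rightarrow> 'v \<Rightarrow> 'v \<Rightarrow> nat" where
  "arrows B i j = nat (B i j)"

definition mutate :: "'v \<Rightarrow> ('v \<Rightarrow> 'v \<Rightarrow> int) \<Rightarrow> ('v \<Rightarrow> 'v \<Rightarrow> int)" where
  "mutate k B = (\<lambda>i j. if i = k \<or> j = k then - B i j
       else B i j + int (arrows B i k * arrows B k j) - int (arrows B j k * arrows B k i))"

definition mutate_list :: "'v list \<Rightarrow> ('v \<Rightarrow> 'v \<Rightarrow> int) \<Rightarrow> ('v \<Rightarrow> 'v \<Rightarrow> int)" where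
  "mutate_list ks B = fold mutate ks B"

text \<open>Q^(n) for an infinite mutation sequence m = m_1 m_2 ...; here m n is m_{n+1}.\<close>
primrec Qseq :: "('v \<Rightarrow> 'v \<Rightarrow> int) \<Rightarrow> (nat \<Rightarrow> 'v) \<Rightarrow> nat \<Rightarrow> ('v \<Rightarrow> 'v \<Rightarrow> int)" where
  "Qseq B m 0 = B"
| "Qseq B m (Suc n) = mutate (m n) (Qseq B m n)"

text \<open>Induced subquiver on S (used for the mutable part Q^mut, on vertex set Mu,
with no frozen vertices).\<close>
definition restrict_q :: "'v set \<Rightarrow> ('v \<Rightarrow> 'v \<Rightarrow> int) \<Rightarrow> ('v \<Rightarrow> 'v \<Rightarrow> int)" where
  "restrict_q S B = (\<lambda>i j. if i \<in> S \<and> j \<in> S then B i j else 0)"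

definition adjacent :: "('v \<Rightarrow> 'v \<Rightarrow> int) \<Rightarrow> 'v \<Rightarrow> 'v \<Rightarrow> bool" where
  "adjacent B i j \<longleftrightarrow> B i j \<noteq> 0"

definition connected_quiver :: "'v set \<Rightarrow> 'v set \<Rightarrow> ('v \<Rightarrow> 'v \<Rightarrow> int) \<Rightarrow> bool" where
  "connected_quiver V Mu B \<longleftrightarrow>
     (\<forall>i\<in>Mu. \<forall>j\<in>Mu. (i, j) \<in> {(x, y). x \<in> Mu \<and> y \<in> Mu \<and> adjacent B x y}\<^sup>*)
     \<and> (\<forall>f\<in>V - Mu. \<exists>i\<in>Mu. adjacent B f i)"

definition mutation_abundant :: "'v set \<Rightarrow> ('v \<Rightarrow> 'v \<Rightarrow> int) \<Rightarrow> bool" where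
  "mutation_abundant S B \<longleftrightarrow>
     (\<forall>ks. set ks \<subseteq> S \<longrightarrow> (\<forall>i\<in>S. \<forall>j\<in>S. i \<noteq> j \<longrightarrow> \<bar>mutate_list ks B i j\<bar> \<ge> 2))"

definition oriented_3cycle :: "'v set \<Rightarrow> ('v \<Rightarrow> 'v \<Rightarrow> int) \<Rightarrow> 'v set \<Rightarrow> bool" where
  "oriented_3cycle Fr B S \<longleftrightarrow> card S = 3 \<and> card (S \<inter> Fr) \<le> 1
     \<and> \<not> acyclic {(x, y). x \<in> S \<and> y \<in> S \<and> B x y > 0}"

definition cycle_preserving :: "'v set \<Rightarrow> 'v set \<Rightarrow> ('v \<Rightarrow> 'v \<Rightarrow> int) \<Rightarrow> 'v \<Rightarrow> bool" where
  "cycle_preserving S Fr B j \<longleftrightarrow>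
     (\<forall>i k. {i, j, k} \<subseteq> S \<longrightarrow> oriented_3cycle Fr B {i, j, k}
        \<longrightarrow> oriented_3cycle Fr (mutate j B) {i, j, k})"

definition reduced_seq :: "(nat \<Rightarrow> 'v) \<Rightarrow> bool" where
  "reduced_seq m \<longleftrightarrow> (\<forall>n. m n \<noteq> m (Suc n))"

definition weakly_balanced :: "'v set \<Rightarrow> (nat \<Rightarrow> 'v) \<Rightarrow> bool" where
  "weakly_balanced Mu m \<longleftrightarrow> (\<forall>k\<in>Mu. infinite {n. m n = k})"

definition cycle_preserving_seq :: "'v set \<Rightarrow> ('v \<Rightarrow> 'v \<Rightarrow> int) \<Rightarrow> (nat \<Rightarrow> 'v) \<Rightarrow> bool" where
  "cycle_preserving_seq Mu B m \<longleftrightarrow>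
     (\<forall>n. cycle_preserving Mu {} (restrict_q Mu (Qseq B m n)) (m n))"

definition red :: "'v set \<Rightarrow> 'v set \<Rightarrow> ('v \<Rightarrow> 'v \<Rightarrow> int) \<Rightarrow> 'v \<Rightarrow> bool" where
  "red V Mu B v \<longleftrightarrow> (\<exists>f\<in>V - Mu. adjacent B v f) \<and> (\<forall>f\<in>V - Mu. B f v \<ge> 0)"

definition green :: "'v set \<Rightarrow> 'v set \<Rightarrow> ('v \<Rightarrow> 'v \<Rightarrow> int) \<Rightarrow> 'v \<Rightarrow> bool" where
  "green V Mu B v \<longleftrightarrow> (\<exists>f\<in>V - Mu. adjacent B v f) \<and> (\<forall>f\<in>V - Mu. B v f \<ge> 0)"

definition sign_coherent :: "'v set \<Rightarrow> 'v set \<Rightarrow> ('v \<Rightarrow> 'v \<Rightarrow> int) \<Rightarrow> bool" where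
  "sign_coherent V Mu B \<longleftrightarrow> (\<forall>v\<in>Mu. red V Mu B v \<or> green V Mu B v)"

end

theory Submission
  imports Defs
begin

definition Ic :: "int \<Rightarrow> int \<Rightarrow> int \<Rightarrow> int \<Rightarrow> int \<Rightarrow> bool" where
  "Ic x y z a d \<longleftrightarrow> x \<ge> 1 \<and> y \<ge> 1 \<and> -(y*(d-1)) \<le> z \<and> z \<le> x*(a-1)"
definition TBc :: "int \<Rightarrow> int \<Rightarrow> int \<Rightarrow> int \<Rightarrow> bool" where
  "TBc x y z a \<longleftrightarrow> x \<ge> 1 \<and> y \<le> 0 \<and> 1 \<le> z \<and> z \<le> x*(a-1)"
definition TCc :: "int \<Rightarrow> int \<Rightarrow> int \<Rightarrow> int \<Rightarrow> bool" where
  "TCc x y z d \<longleftrightarrow> x \<le> 0 \<and> y \<ge> 1 \<and> -(y*(d-1)) \<le> z \<and> z \<le> -1"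

lemma h1: "(a::int) \<ge> 2 \<Longrightarrow> t \<ge> 0 \<Longrightarrow> a*t \<ge> 2*t"
  by (simp add: mult_right_mono)
lemma h2: "(a::int) \<ge> 2 \<Longrightarrow> t \<ge> 0 \<Longrightarrow> t*(a-1) \<ge> t"
proof -
  assume "a \<ge> 2" "t \<ge> 0"
  hence "t*1 \<le> t*(a-1)" by (intro mult_left_mono) auto
  thus ?thesis by simp
qed

lemma stepMi:
  fixes x y z a b d x' y' z' :: int
  assumes a: "a \<ge> 2" and b: "b \<ge> 2" and d: "d \<ge> 2"
    and ex: "x' = a * max x 0 - z" and ey: "y' = y + b * max (-x) 0" and ez: "z' = x"
  shows "Ic x y z a d \<Longrightarrow> Ic x' y' z' a b"
    and "TBc x y z a \<Longrightarrow> TBc x' y' z' a"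
    and "TCc x y z d \<Longrightarrow> Ic x' y' z' a b"
    and "\<not> (Ic x' y' z' a b \<or> TBc x' y' z' a \<or> TCc x' y' z' b) \<Longrightarrow>
         \<bar>x'\<bar> + \<bar>y'\<bar> + \<bar>z'\<bar> < \<bar>x\<bar> + \<bar>y\<bar> + \<bar>z\<bar> \<or> (x = 0 \<and> \<bar>x'\<bar> + \<bar>y'\<bar> + \<bar>z'\<bar> = \<bar>x\<bar> + \<bar>y\<bar> + \<bar>z\<bar>)"
proof -
  show "Ic x y z a d \<Longrightarrow> Ic x' y' z' a b"
  proof -
    assume I: "Ic x y z a d"
    hence x1: "x \<ge> 1" and y1: "y \<ge> 1" and zu: "z \<le> x*(a-1)" by (auto simp: Ic_def)
    have ex2: "x' = a*x - z" using ex x1 by simp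
    have "x*(a-1) = a*x - x" by (simp add: algebra_simps)
    hence xx: "x' \<ge> x" using ex2 zu by linarith
    have "x'*(a-1) \<ge> x'" using h2[OF a, of "x'"] xx x1 by simp
    moreover have "y' = y" using ey x1 by simp
    moreover have "y'*(b-1) \<ge> 0" using y1 b \<open>y' = y\<close> by (intro mult_nonneg_nonneg) auto
    ultimately show ?thesis using xx x1 y1 ez unfolding Ic_def by (intro conjI; linarith)
  qed
  show "TBc x y z a \<Longrightarrow> TBc x' y' z' a"
  proof -
    assume I: "TBc x y z a"
    hence x1: "x \<ge> 1" and y1: "y \<le> 0" and zu: "z \<le> x*(a-1)" by (auto simp: TBc_def)
    have ex2: "x' = a*x - z" using ex x1 by simp
    have "x*(a-1) = a*x - x" by (simp add: algebra_simps)
    hence xx: "x' \<ge> x" using ex2 zu by linarith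
    have "x'*(a-1) \<ge> x'" using h2[OF a, of "x'"] xx x1 by simp
    moreover have "y' = y" using ey x1 by simp
    ultimately show ?thesis using xx x1 y1 ez unfolding TBc_def by (intro conjI; linarith)
  qed
  show "TCc x y z d \<Longrightarrow> Ic x' y' z' a b"
  proof -
    assume I: "TCc x y z d"
    hence x0: "x \<le> 0" and y1: "y \<ge> 1" and zu: "z \<le> -1" by (auto simp: TCc_def)
    have ex2: "x' = - z" using ex x0 by simp
    have ey2: "y' = y + b*(-x)" using ey x0 by simp
    have "b*(-x) \<ge> 2*(-x)" using h1[OF b, of "-x"] x0 by simp
    hence yt: "y' \<ge> -x" "y' \<ge> 1" using ey2 y1 x0 by linarith+
    have "y'*(b-1) \<ge> y'" using h2[OF b, of "y'"] yt by simp
    moreover have "x'*(a-1) \<ge> 0" using ex2 zu a by (intro mult_nonneg_nonneg) auto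
    ultimately show ?thesis using yt ex2 zu ez x0 unfolding Ic_def by (intro conjI; linarith)
  qed
  show "\<not> (Ic x' y' z' a b \<or> TBc x' y' z' a \<or> TCc x' y' z' b) \<Longrightarrow>
         \<bar>x'\<bar> + \<bar>y'\<bar> + \<bar>z'\<bar> < \<bar>x\<bar> + \<bar>y\<bar> + \<bar>z\<bar> \<or> (x = 0 \<and> \<bar>x'\<bar> + \<bar>y'\<bar> + \<bar>z'\<bar> = \<bar>x\<bar> + \<bar>y\<bar> + \<bar>z\<bar>)"
  proof -
    assume N: "\<not> (Ic x' y' z' a b \<or> TBc x' y' z' a \<or> TCc x' y' z' b)"
    show ?thesis
    proof (cases "x \<ge> 1")
      case x1: True
      have ex2: "x' = a*x - z" using ex x1 by simp
      have ey2: "y' = y" using ey x1 by simp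
      have ax: "a*x \<ge> 2*x" using h1[OF a, of x] x1 by simp
      show ?thesis
      proof (cases "2*z \<le> a*x")
        case True
        hence xx: "x' \<ge> x" using ex2 ax by linarith
        have "x'*(a-1) \<ge> x'" using h2[OF a, of "x'"] xx x1 by simp
        moreover have "y'*(b-1) \<ge> 0" if "y' \<ge> 1" using that b by (intro mult_nonneg_nonneg) auto
        ultimately have "Ic x' y' z' a b \<or> TBc x' y' z' a"
        proof (cases "y' \<ge> 1")
          case True
          hence "Ic x' y' z' a b" using xx x1 ez \<open>x'*(a-1) \<ge> x'\<close> \<open>y' \<ge> 1 \<Longrightarrow> y'*(b-1) \<ge> 0\<close>
            unfolding Ic_def by (intro conjI; linarith)
          thus ?thesis by blast
        next
          case False
          hence "TBc x' y' z' a" using xx x1 ez \<open>x'*(a-1) \<ge> x'\<close>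
            unfolding TBc_def by (intro conjI; linarith)
          thus ?thesis by blast
        qed
        thus ?thesis using N by blast
      next
        case False
        hence "\<bar>x'\<bar> < \<bar>z\<bar>" using ex2 ax x1 by linarith
        thus ?thesis using ey2 ez by linarith
      qed
    next
      case False
      hence x0: "x \<le> 0" by simp
      have ex2: "x' = - z" using ex x0 by simp
      have ey2: "y' = y + b*(-x)" using ey x0 by simp
      show ?thesis
      proof (cases "x = 0")
        case True thus ?thesis using ex2 ey2 ez by simp
      next
        case False
        hence xn: "x \<le> -1" using x0 by simp
        have bx: "b*(-x) \<ge> 2*(-x)" using h1[OF b, of "-x"] x0 by simp
        show ?thesis
        proof (cases "\<bar>y'\<bar> < \<bar>y\<bar>")
          case True thus ?thesis using ex2 ez by linarith
        next
          case False
          hence yt: "y' \<ge> -x" "y' \<ge> 1" using ey2 bx xn by linarith+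
          have "y'*(b-1) \<ge> y'" using h2[OF b, of "y'"] yt by simp
          hence "Ic x' y' z' a b \<or> TCc x' y' z' b"
          proof (cases "x' \<ge> 1")
            case True
            moreover have "x'*(a-1) \<ge> 0" using True a by (intro mult_nonneg_nonneg) auto
            ultimately have "Ic x' y' z' a b" using yt ez xn \<open>y'*(b-1) \<ge> y'\<close> unfolding Ic_def by (intro conjI; linarith)
            thus ?thesis by blast
          next
            case False
            hence "TCc x' y' z' b" using yt ez xn \<open>y'*(b-1) \<ge> y'\<close> unfolding TCc_def by (intro conjI; linarith)
            thus ?thesis by blast
          qed
          thus ?thesis using N by blast
        qed
      qed
    qed
  qed
qed

lemma sym_Ic: "Ic y x (-z) d a = Ic x y z a d" by (auto simp: Ic_def)
lemma sym_TB: "TCc y x (-z) a = TBc x y z a" by (auto simp: TBc_def TCc_def)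
lemma sym_TC: "TBc y x (-z) d = TCc x y z d" by (auto simp: TBc_def TCc_def)

lemma stepMj:
  fixes x y z a b d x' y' z' :: int
  assumes a: "a \<ge> 2" and b: "b \<ge> 2" and d: "d \<ge> 2"
    and ex: "x' = x + b * max (-y) 0" and ey: "y' = d * max y 0 + z" and ez: "z' = - y"
  shows "Ic x y z a d \<Longrightarrow> Ic x' y' z' b d"
    and "TCc x y z d \<Longrightarrow> TCc x' y' z' d"
    and "TBc x y z a \<Longrightarrow> Ic x' y' z' b d"
    and "\<not> (Ic x' y' z' b d \<or> TBc x' y' z' b \<or> TCc x' y' z' d) \<Longrightarrow>
         \<bar>x'\<bar> + \<bar>y'\<bar> + \<bar>z'\<bar> < \<bar>x\<bar> + \<bar>y\<bar> + \<bar>z\<bar> \<or> (y = 0 \<and> \<bar>x'\<bar> + \<bar>y'\<bar> + \<bar>z'\<bar> = \<bar>x\<bar> + \<bar>y\<bar> + \<bar>z\<bar>)"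
proof -
  have e1: "y' = d * max y 0 - (-z)" using ey by simp
  have e3: "-z' = y" using ez by simp
  note S = stepMi[where x=y and y=x and z="-z" and a=d and b=b and d=a and x'="y'" and y'="x'" and z'="-z'", OF d b a e1 ex e3]
  show "Ic x y z a d \<Longrightarrow> Ic x' y' z' b d" using S(1) sym_Ic by metis
  show "TCc x y z d \<Longrightarrow> TCc x' y' z' d" using S(2) sym_TB sym_TC by metis
  show "TBc x y z a \<Longrightarrow> Ic x' y' z' b d" using S(3) sym_Ic sym_TB sym_TC by metis
  show "\<not> (Ic x' y' z' b d \<or> TBc x' y' z' b \<or> TCc x' y' z' d) \<Longrightarrow>
         \<bar>x'\<bar> + \<bar>y'\<bar> + \<bar>z'\<bar> < \<bar>x\<bar> + \<bar>y\<bar> + \<bar>z\<bar> \<or> (y = 0 \<and> \<bar>x'\<bar> + \<bar>y'\<bar> + \<bar>z'\<bar> = \<bar>x\<bar> + \<bar>y\<bar> + \<bar>z\<bar>)"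
  proof -
    assume N: "\<not> (Ic x' y' z' b d \<or> TBc x' y' z' b \<or> TCc x' y' z' d)"
    have "\<not> (Ic (y') (x') (-z') d b \<or> TBc (y') (x') (-z') d \<or> TCc (y') (x') (-z') b)"
      using N by (simp only: sym_Ic sym_TB sym_TC) blast
    from S(4)[OF this] show ?thesis by (simp add: add.commute add.left_commute)
  qed
qed

lemma noninc_mono:
  assumes "\<And>n. f (Suc n) \<le> (f n::nat)" and "n1 \<le> n" shows "f n \<le> f n1"
  using assms(2)
proof (induction rule: dec_induct)
  case base thus ?case by simp
next
  case (step k) thus ?case using assms(1)[of k] by simp
qed

lemma noninc_eventually_const:
  assumes "\<And>n. f (Suc n) \<le> (f n::nat)"
  shows "\<exists>n1. \<forall>n \<ge> n1. f n = f n1"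
proof -
  obtain n1 where n1: "\<forall>k'. f n1 \<le> f k'"
    using ex_has_least_nat[of "\<lambda>_. True" 0 f] by blast
  show ?thesis
    using n1 noninc_mono[where f=f, OF assms] by (intro exI[of _ n1]) (auto intro: antisym)
qed

lemma natless: "0 \<le> (a::int) \<Longrightarrow> a < b \<Longrightarrow> nat a < nat b" by simp

lemma cyc_game:
  fixes X Y Z A Bw D :: "nat \<Rightarrow> int" and mi :: "nat \<Rightarrow> bool"
  assumes wA: "\<And>n. A n \<ge> 2" and wB: "\<And>n. Bw n \<ge> 2" and wD: "\<And>n. D n \<ge> 2"
    and Mi: "\<And>n. mi n \<Longrightarrow> X (Suc n) = A n * max (X n) 0 - Z n \<and> Y (Suc n) = Y n + Bw n * max (- X n) 0
                 \<and> Z (Suc n) = X n \<and> A (Suc n) = A n \<and> D (Suc n) = Bw n"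
    and Mj: "\<And>n. \<not> mi n \<Longrightarrow> X (Suc n) = X n + Bw n * max (- Y n) 0 \<and> Y (Suc n) = D n * max (Y n) 0 + Z n
                 \<and> Z (Suc n) = - Y n \<and> A (Suc n) = Bw n \<and> D (Suc n) = D n"
    and nz: "\<And>n. \<not> (X n = 0 \<and> Y n = 0 \<and> Z n = 0)"
    and sw: "\<And>n. \<exists>n'\<ge>n. mi n' \<noteq> mi (Suc n')"
  shows "\<exists>N. \<forall>n\<ge>N. Ic (X n) (Y n) (Z n) (A n) (D n)"
proof -
  define G where "G n = Ic (X n) (Y n) (Z n) (A n) (D n)" for n
  define TB where "TB n = TBc (X n) (Y n) (Z n) (A n)" for n
  define TC where "TC n = TCc (X n) (Y n) (Z n) (D n)" for n
  define nr where "nr n = nat (\<bar>X n\<bar> + \<bar>Y n\<bar> + \<bar>Z n\<bar>)" for n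
  have SMi: "Ic (X n) (Y n) (Z n) (A n) (D n) \<Longrightarrow> G (Suc n)"
    "TBc (X n) (Y n) (Z n) (A n) \<Longrightarrow> TB (Suc n)"
    "TCc (X n) (Y n) (Z n) (D n) \<Longrightarrow> G (Suc n)"
    "\<not> (G (Suc n) \<or> TB (Suc n) \<or> TC (Suc n)) \<Longrightarrow>
       \<bar>X (Suc n)\<bar> + \<bar>Y (Suc n)\<bar> + \<bar>Z (Suc n)\<bar> < \<bar>X n\<bar> + \<bar>Y n\<bar> + \<bar>Z n\<bar> \<or>
       (X n = 0 \<and> \<bar>X (Suc n)\<bar> + \<bar>Y (Suc n)\<bar> + \<bar>Z (Suc n)\<bar> = \<bar>X n\<bar> + \<bar>Y n\<bar> + \<bar>Z n\<bar>)"
    if "mi n" for n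
  proof -
    note e = Mi[OF that]
    note S = stepMi[where x="X n" and y="Y n" and z="Z n" and a="A n" and b="Bw n" and d="D n"
        and x'="X (Suc n)" and y'="Y (Suc n)" and z'="Z (Suc n)", OF wA wB wD]
    show "Ic (X n) (Y n) (Z n) (A n) (D n) \<Longrightarrow> G (Suc n)"
      "TBc (X n) (Y n) (Z n) (A n) \<Longrightarrow> TB (Suc n)"
      "TCc (X n) (Y n) (Z n) (D n) \<Longrightarrow> G (Suc n)"
      "\<not> (G (Suc n) \<or> TB (Suc n) \<or> TC (Suc n)) \<Longrightarrow>
       \<bar>X (Suc n)\<bar> + \<bar>Y (Suc n)\<bar> + \<bar>Z (Suc n)\<bar> < \<bar>X n\<bar> + \<bar>Y n\<bar> + \<bar>Z n\<bar> \<or>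
       (X n = 0 \<and> \<bar>X (Suc n)\<bar> + \<bar>Y (Suc n)\<bar> + \<bar>Z (Suc n)\<bar> = \<bar>X n\<bar> + \<bar>Y n\<bar> + \<bar>Z n\<bar>)"
      using S e unfolding G_def TB_def TC_def by simp_all
  qed
  have SMj: "Ic (X n) (Y n) (Z n) (A n) (D n) \<Longrightarrow> G (Suc n)"
    "TCc (X n) (Y n) (Z n) (D n) \<Longrightarrow> TC (Suc n)"
    "TBc (X n) (Y n) (Z n) (A n) \<Longrightarrow> G (Suc n)"
    "\<not> (G (Suc n) \<or> TB (Suc n) \<or> TC (Suc n)) \<Longrightarrow>
       \<bar>X (Suc n)\<bar> + \<bar>Y (Suc n)\<bar> + \<bar>Z (Suc n)\<bar> < \<bar>X n\<bar> + \<bar>Y n\<bar> + \<bar>Z n\<bar> \<or>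
       (Y n = 0 \<and> \<bar>X (Suc n)\<bar> + \<bar>Y (Suc n)\<bar> + \<bar>Z (Suc n)\<bar> = \<bar>X n\<bar> + \<bar>Y n\<bar> + \<bar>Z n\<bar>)"
    if "\<not> mi n" for n
  proof -
    note e = Mj[OF that]
    note S = stepMj[where x="X n" and y="Y n" and z="Z n" and a="A n" and b="Bw n" and d="D n"
        and x'="X (Suc n)" and y'="Y (Suc n)" and z'="Z (Suc n)", OF wA wB wD]
    show "Ic (X n) (Y n) (Z n) (A n) (D n) \<Longrightarrow> G (Suc n)"
      "TCc (X n) (Y n) (Z n) (D n) \<Longrightarrow> TC (Suc n)"
      "TBc (X n) (Y n) (Z n) (A n) \<Longrightarrow> G (Suc n)"
      "\<not> (G (Suc n) \<or> TB (Suc n) \<or> TC (Suc n)) \<Longrightarrow>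
       \<bar>X (Suc n)\<bar> + \<bar>Y (Suc n)\<bar> + \<bar>Z (Suc n)\<bar> < \<bar>X n\<bar> + \<bar>Y n\<bar> + \<bar>Z n\<bar> \<or>
       (Y n = 0 \<and> \<bar>X (Suc n)\<bar> + \<bar>Y (Suc n)\<bar> + \<bar>Z (Suc n)\<bar> = \<bar>X n\<bar> + \<bar>Y n\<bar> + \<bar>Z n\<bar>)"
      using S e unfolding G_def TB_def TC_def by simp_all
  qed
  have GS: "G n \<Longrightarrow> G (Suc n)" for n
    using SMi(1) SMj(1) unfolding G_def by (cases "mi n") auto
  have Gall: "G N \<Longrightarrow> \<forall>n\<ge>N. G n" for N
  proof (intro allI impI)
    fix n assume gn: "G N" and "N \<le> n"
    from \<open>N \<le> n\<close> show "G n"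
    proof (induction rule: dec_induct)
      case base thus ?case using gn .
    next
      case (step k) thus ?case using GS by blast
    qed
  qed
  have exnmi: "\<exists>n'\<ge>n. \<not> mi n'" for n
    using sw[of n] by (metis le_Suc_eq)
  have exmi: "\<exists>n'\<ge>n. mi n'" for n
    using sw[of n] by (metis le_Suc_eq)
  have fromTB: "\<exists>N. G N" if "TB n" for n
  proof (rule ccontr)
    assume nG: "\<not> (\<exists>N. G N)"
    have "TB (n + k) \<and> mi (n + k)" for k
    proof (induction k)
      case 0
      have "mi n" using SMj(3)[of n] that nG unfolding TB_def by blast
      thus ?case using that by simp
    next
      case (Suc k)
      hence "TB (Suc (n + k))" using SMi(2)[of "n+k"] unfolding TB_def by blast
      moreover have "mi (Suc (n+k))" using SMj(3)[of "Suc (n+k)"] calculation nG unfolding TB_def by blast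
      ultimately show ?case by simp
    qed
    moreover obtain n' where "n' \<ge> n" "\<not> mi n'" using exnmi by blast
    ultimately show False by (metis le_add_diff_inverse)
  qed
  have fromTC: "\<exists>N. G N" if "TC n" for n
  proof (rule ccontr)
    assume nG: "\<not> (\<exists>N. G N)"
    have "TC (n + k) \<and> \<not> mi (n + k)" for k
    proof (induction k)
      case 0
      have "\<not> mi n" using SMi(3)[of n] that nG unfolding TC_def by blast
      thus ?case using that by simp
    next
      case (Suc k)
      hence "TC (Suc (n + k))" using SMj(2)[of "n+k"] unfolding TC_def by blast
      moreover have "\<not> mi (Suc (n+k))" using SMi(3)[of "Suc (n+k)"] calculation nG unfolding TC_def by blast
      ultimately show ?case by simp
    qed
    moreover obtain n' where "n' \<ge> n" "mi n'" using exmi by blast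
    ultimately show False by (metis le_add_diff_inverse)
  qed
  show ?thesis
  proof (cases "\<exists>n. G n \<or> TB n \<or> TC n")
    case True
    then obtain N where "G N" using fromTB fromTC by blast
    thus ?thesis using Gall unfolding G_def by blast
  next
    case False
    have nrs: "nr (Suc n) < nr n \<or> (nr (Suc n) = nr n \<and> (mi n \<longrightarrow> X n = 0) \<and> (\<not> mi n \<longrightarrow> Y n = 0))" for n
    proof (cases "mi n")
      case True
      have p: "0 \<le> \<bar>X (Suc n)\<bar> + \<bar>Y (Suc n)\<bar> + \<bar>Z (Suc n)\<bar>" by simp
      have "\<bar>X (Suc n)\<bar> + \<bar>Y (Suc n)\<bar> + \<bar>Z (Suc n)\<bar> < \<bar>X n\<bar> + \<bar>Y n\<bar> + \<bar>Z n\<bar> \<or>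
       (X n = 0 \<and> \<bar>X (Suc n)\<bar> + \<bar>Y (Suc n)\<bar> + \<bar>Z (Suc n)\<bar> = \<bar>X n\<bar> + \<bar>Y n\<bar> + \<bar>Z n\<bar>)"
        using SMi(4)[OF True] False by blast
      thus ?thesis unfolding nr_def using True natless[OF p] by auto
    next
      case F: False
      have p: "0 \<le> \<bar>X (Suc n)\<bar> + \<bar>Y (Suc n)\<bar> + \<bar>Z (Suc n)\<bar>" by simp
      have "\<bar>X (Suc n)\<bar> + \<bar>Y (Suc n)\<bar> + \<bar>Z (Suc n)\<bar> < \<bar>X n\<bar> + \<bar>Y n\<bar> + \<bar>Z n\<bar> \<or>
       (Y n = 0 \<and> \<bar>X (Suc n)\<bar> + \<bar>Y (Suc n)\<bar> + \<bar>Z (Suc n)\<bar> = \<bar>X n\<bar> + \<bar>Y n\<bar> + \<bar>Z n\<bar>)"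
        using SMj(4)[OF F] False by blast
      thus ?thesis unfolding nr_def using F natless[OF p] by auto
    qed
    have "nr (Suc n) \<le> nr n" for n using nrs[of n] by linarith
    then obtain n1 where n1: "\<forall>n\<ge>n1. nr n = nr n1" using noninc_eventually_const by blast
    have eq: "(mi n \<longrightarrow> X n = 0) \<and> (\<not> mi n \<longrightarrow> Y n = 0)" if "n \<ge> n1" for n
      using nrs[of n] n1 that by (metis le_SucI less_irrefl)
    have z0: "Z (Suc n) = 0" if "n \<ge> n1" for n
      using eq[OF that] Mi[of n] Mj[of n] by (cases "mi n") auto
    obtain n' where n': "n' \<ge> Suc n1" "mi n' \<noteq> mi (Suc n')" using sw by blast
    have zn': "Z n' = 0" using z0[of "n' - 1"] n' by (metis Suc_diff_1 Suc_le_lessD diff_le_mono diff_Suc_1 le0 less_imp_Suc_add zero_less_Suc)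
    have zn'': "Z (Suc n') = 0" using z0[of n'] n' by simp
    have False
    proof (cases "mi n'")
      case True
      hence a1: "X n' = 0" using eq[of n'] n' by simp
      have "\<not> mi (Suc n')" using True n' by simp
      hence a2: "Y (Suc n') = 0" using eq[of "Suc n'"] n' by simp
      have "X (Suc n') = 0" using Mi[OF True] a1 zn' by simp
      thus False using nz[of "Suc n'"] a2 zn'' by simp
    next
      case F: False
      hence a1: "Y n' = 0" using eq[of n'] n' by simp
      have "mi (Suc n')" using F n' by simp
      hence a2: "X (Suc n') = 0" using eq[of "Suc n'"] n' by simp
      have "Y (Suc n') = 0" using Mj[OF F] a1 zn' by simp
      thus False using nz[of "Suc n'"] a2 zn'' by simp
    qed
    thus ?thesis by blast
  qed
qed

lemma acyc_step:
  fixes e A C :: "nat \<Rightarrow> int"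
  assumes wA: "\<And>n. A n \<ge> 2" and wC: "\<And>n. C n \<ge> 2"
    and rec: "\<And>n. e (n+3) = - e n + A n * max (e (n+1)) 0 + C n * max (e (n+2)) 0"
  defines "G \<equiv> \<lambda>n. e n \<ge> 1 \<and> e (n+1) \<ge> 1 \<and> e (n+2) \<ge> e n"
  defines "W \<equiv> \<lambda>n. \<bar>e n\<bar> + \<bar>e (n+1)\<bar> + \<bar>e (n+2)\<bar>"
  shows "G n \<Longrightarrow> G (Suc n)"
    and "G n \<Longrightarrow> e (n+3) > e (n+2)"
    and "G (n+1) \<or> G (n+2) \<or> G (n+3) \<or> W (n+1) < W n \<or>
         (W (n+1) = W n \<and> e (n+1) \<le> 0 \<and> e (n+2) \<le> 0 \<and> e (n+3) = - e n)"
proof -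
  have r0: "e (n+3) = - e n + A n * max (e (n+1)) 0 + C n * max (e (n+2)) 0" by (rule rec)
  have r1: "e (n+4) = - e (n+1) + A (n+1) * max (e (n+2)) 0 + C (n+1) * max (e (n+3)) 0"
    using rec[of "n+1"] by (simp add: eval_nat_numeral)
  have r2: "e (n+5) = - e (n+2) + A (n+2) * max (e (n+3)) 0 + C (n+2) * max (e (n+4)) 0"
    using rec[of "n+2"] by (simp add: eval_nat_numeral)
  have m: "\<And>k t. t \<ge> 0 \<Longrightarrow> A k * t \<ge> 2 * t" "\<And>k t. t \<ge> 0 \<Longrightarrow> C k * t \<ge> 2 * t"
    using h1 wA wC by blast+
  have Gsuc: "G n \<Longrightarrow> G (Suc n) \<and> e (n+3) > e (n+2)"
  proof -
    assume g: "G n"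
    hence g1: "e n \<ge> 1" "e (n+1) \<ge> 1" "e (n+2) \<ge> e n" unfolding G_def by auto
    have "A n * max (e (n+1)) 0 \<ge> 2 * e (n+1)" using m(1)[of "e (n+1)" n] g1 by simp
    moreover have "C n * max (e (n+2)) 0 \<ge> 2 * e (n+2)" using m(2)[of "e (n+2)" n] g1 by simp
    ultimately have "e (n+3) \<ge> e (n+2) + 2 * e (n+1)" using r0 g1 by linarith
    thus ?thesis using g1 unfolding G_def by (simp add: eval_nat_numeral)
  qed
  show "G n \<Longrightarrow> G (Suc n)" using Gsuc by blast
  show "G n \<Longrightarrow> e (n+3) > e (n+2)" using Gsuc by blast
  define p where "p = max (e (n+1)) 0"
  define q where "q = max (e (n+2)) 0"
  define S where "S = A n * p + C n * q"
  have pq: "p \<ge> 0" "q \<ge> 0" unfolding p_def q_def by auto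
  have Ap: "A n * p \<ge> 2 * p" using m(1) pq by blast
  have Cq: "C n * q \<ge> 2 * q" using m(2) pq by blast
  have e3: "e (n+3) = S - e n" using r0 unfolding S_def p_def q_def by simp
  show "G (n+1) \<or> G (n+2) \<or> G (n+3) \<or> W (n+1) < W n \<or>
         (W (n+1) = W n \<and> e (n+1) \<le> 0 \<and> e (n+2) \<le> 0 \<and> e (n+3) = - e n)"
  proof (cases "S = 0")
    case True
    hence "p = 0" "q = 0" using Ap Cq pq unfolding S_def by linarith+
    hence "e (n+1) \<le> 0" "e (n+2) \<le> 0" unfolding p_def q_def by auto
    moreover have "e (n+3) = - e n" using e3 True by simp
    ultimately show ?thesis unfolding W_def by (simp add: eval_nat_numeral)
  next
    case False
    hence Spos: "S > 0" using Ap Cq pq unfolding S_def by linarith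
    show ?thesis
    proof (cases "2 * e n > S")
      case True
      hence "\<bar>e (n+3)\<bar> < \<bar>e n\<bar>" using e3 Spos by linarith
      hence "W (n+1) < W n" unfolding W_def by (simp add: eval_nat_numeral)
      thus ?thesis by blast
    next
      case False
      hence a3: "2 * e (n+3) \<ge> S" using e3 by linarith
      show ?thesis
      proof (cases "e (n+1) \<ge> 1")
        case a1: True
        show ?thesis
        proof (cases "e (n+2) \<ge> 1")
          case a2: True
          have "p = e (n+1)" "q = e (n+2)" using a1 a2 unfolding p_def q_def by auto
          hence "S \<ge> 2 * e (n+1) + 2 * e (n+2)" using Ap Cq S_def by linarith
          hence "e (n+3) \<ge> e (n+1)" using a3 a2 by linarith
          hence "G (n+1)" using a1 a2 unfolding G_def by (simp add: eval_nat_numeral)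
          thus ?thesis by blast
        next
          case a2: False
          have "q = 0" using a2 unfolding q_def by simp
          moreover have "p = e (n+1)" using a1 unfolding p_def by auto
          ultimately have "S \<ge> 2 * e (n+1)" using Ap S_def by simp
          hence b3: "e (n+3) \<ge> e (n+1)" using a3 by linarith
          have "C (n+1) * max (e (n+3)) 0 \<ge> 2 * e (n+3)" using m(2)[of "e (n+3)" "n+1"] b3 a1 by simp
          moreover have "max (e (n+2)) 0 = 0" using a2 by simp
          ultimately have b4: "e (n+4) \<ge> e (n+3)" using r1 b3 by simp
          have "A (n+2) * max (e (n+3)) 0 \<ge> 2 * e (n+3)" using m(1)[of "e (n+3)" "n+2"] b3 a1 by simp
          moreover have "C (n+2) * max (e (n+4)) 0 \<ge> 2 * e (n+4)" using m(2)[of "e (n+4)" "n+2"] b4 b3 a1 by simp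
          ultimately have "e (n+5) \<ge> e (n+3)" using r2 a2 b3 b4 a1 by linarith
          hence "G (n+3)" using b3 b4 a1 unfolding G_def by (simp add: eval_nat_numeral)
          thus ?thesis by blast
        qed
      next
        case a1: False
        have "p = 0" using a1 unfolding p_def by simp
        hence Sq: "S = C n * q" unfolding S_def by simp
        show ?thesis
        proof (cases "e (n+2) \<ge> 1")
          case a2: True
          have "q = e (n+2)" using a2 unfolding q_def by auto
          hence "S \<ge> 2 * e (n+2)" using Cq Sq by simp
          hence b3: "e (n+3) \<ge> e (n+2)" using a3 by linarith
          have "A (n+1) * max (e (n+2)) 0 \<ge> 2 * e (n+2)" using m(1)[of "e (n+2)" "n+1"] a2 by simp
          moreover have "C (n+1) * max (e (n+3)) 0 \<ge> 2 * e (n+3)" using m(2)[of "e (n+3)" "n+1"] b3 a2 by simp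
          ultimately have "e (n+4) \<ge> e (n+2)" using r1 a1 b3 a2 by linarith
          hence "G (n+2)" using b3 a2 unfolding G_def by (simp add: eval_nat_numeral)
          thus ?thesis by blast
        next
          case a2: False
          have "q = 0" using a2 unfolding q_def by simp
          thus ?thesis using Sq Spos by simp
        qed
      qed
    qed
  qed
qed

lemma acyc_seq:
  fixes e A C :: "nat \<Rightarrow> int"
  assumes wA: "\<And>n. A n \<ge> 2" and wC: "\<And>n. C n \<ge> 2"
    and rec: "\<And>n. e (n+3) = - e n + A n * max (e (n+1)) 0 + C n * max (e (n+2)) 0"
    and nz: "\<And>n. \<not> (e n = 0 \<and> e (n+1) = 0 \<and> e (n+2) = 0)"
  shows "\<exists>N. \<forall>n\<ge>N. 1 \<le> e n \<and> e n < e (Suc n)"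
proof -
  define G where "G \<equiv> \<lambda>n. e n \<ge> 1 \<and> e (n+1) \<ge> 1 \<and> e (n+2) \<ge> e n"
  define W where "W \<equiv> \<lambda>n. \<bar>e n\<bar> + \<bar>e (n+1)\<bar> + \<bar>e (n+2)\<bar>"
  have S1: "G n \<Longrightarrow> G (Suc n)" for n
    using acyc_step(1)[OF wA wC rec, of n] unfolding G_def by blast
  have S2: "G n \<Longrightarrow> e (n+3) > e (n+2)" for n
    using acyc_step(2)[OF wA wC rec, of n] unfolding G_def by blast
  have S3: "G (n+1) \<or> G (n+2) \<or> G (n+3) \<or> W (n+1) < W n \<or>
         (W (n+1) = W n \<and> e (n+1) \<le> 0 \<and> e (n+2) \<le> 0 \<and> e (n+3) = - e n)" for n
    using acyc_step(3)[OF wA wC rec, of n] unfolding G_def W_def by blast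
  have Gall: "G N \<Longrightarrow> \<forall>n\<ge>N. G n" for N
  proof (intro allI impI)
    fix n assume gn: "G N" and "N \<le> n"
    from \<open>N \<le> n\<close> show "G n"
    proof (induction rule: dec_induct)
      case base thus ?case using gn .
    next
      case (step k) thus ?case using S1 by blast
    qed
  qed
  show ?thesis
  proof (cases "\<exists>N. G N")
    case True
    then obtain N where "G N" by blast
    hence g: "\<forall>n\<ge>N. G n" using Gall by blast
    show ?thesis
    proof (intro exI[of _ "N+2"] allI impI)
      fix n assume n: "N + 2 \<le> n"
      have "G n" using g n by simp
      hence "1 \<le> e n" unfolding G_def by simp
      moreover define k where "k = n - 2"
      have k: "n = k + 2" "k \<ge> N" using n unfolding k_def by auto
      have "G k" using g k by simp
      hence "e (k + 3) > e (k + 2)" using S2 by blast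
      hence "e (Suc n) > e n" using k by (simp add: eval_nat_numeral)
      ultimately show "1 \<le> e n \<and> e n < e (Suc n)" by simp
    qed
  next
    case False
    define w where "w n = nat (W n)" for n
    have st: "W (n+1) < W n \<or> (W (n+1) = W n \<and> e (n+1) \<le> 0 \<and> e (n+2) \<le> 0 \<and> e (n+3) = - e n)" for n
      using S3[of n] False by blast
    have Wp: "W n \<ge> 0" for n unfolding W_def by simp
    have Wle: "W (Suc n) \<le> W n" for n using st[of n] by fastforce
    have "w (Suc n) \<le> w n" for n unfolding w_def using Wle[of n] by (rule nat_mono)
    then obtain n1 where n1: "\<forall>n\<ge>n1. w n = w n1" using noninc_eventually_const by blast
    have c: "e (n+1) \<le> 0 \<and> e (n+2) \<le> 0 \<and> e (n+3) = - e n" if "n \<ge> n1" for n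
    proof -
      have "w (Suc n) = w n" using n1 that by (metis le_SucI)
      hence "W (Suc n) = W n" using Wp[of n] Wp[of "Suc n"] unfolding w_def by simp
      hence "\<not> W (n+1) < W n" by simp
      thus ?thesis using st[of n] by blast
    qed
    have z1: "e (n1+1) = 0"
      using c[of n1] c[of "n1+1"] c[of "n1+3"] by (simp add: eval_nat_numeral)
    have z2: "e (n1+2) = 0"
      using c[of n1] c[of "n1+2"] c[of "n1+3"] by (simp add: eval_nat_numeral)
    have z3: "e (n1+3) = 0"
      using c[of "n1+1"] c[of "n1+3"] c[of "n1+4"] by (simp add: eval_nat_numeral)
    show ?thesis using nz[of "n1+1"] z1 z2 z3 by (simp add: eval_nat_numeral)
  qed
qed

definition skew :: "('v \<Rightarrow> 'v \<Rightarrow> int) \<Rightarrow> bool" where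
  "skew B \<longleftrightarrow> (\<forall>i j. B i j = - B j i)"

lemma skew_diag: "skew B \<Longrightarrow> B i i = 0"
  unfolding skew_def by (metis add.inverse_inverse neg_equal_zero)

lemma int_arr: "int (arrows B i k) = max (B i k) 0"
  unfolding arrows_def by (simp add: max_def)

lemma int_arrows: "int (arrows B i k * arrows B k j) = max (B i k) 0 * max (B k j) 0"
  by (simp only: of_nat_mult int_arr)

lemma mut_row: "mutate k B k j = - B k j" and mut_col: "mutate k B i k = - B i k"
  unfolding mutate_def by simp_all

lemma mut_off: "i \<noteq> k \<Longrightarrow> j \<noteq> k \<Longrightarrow>
  mutate k B i j = B i j + max (B i k) 0 * max (B k j) 0 - max (B j k) 0 * max (B k i) 0"
  unfolding mutate_def by (simp only: int_arrows) simp

lemma skew_mutate: "skew B \<Longrightarrow> skew (mutate k B)"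
  unfolding skew_def
proof (intro allI)
  fix i j assume s: "\<forall>i j. B i j = - B j i"
  show "mutate k B i j = - mutate k B j i"
  proof (cases "i = k \<or> j = k")
    case True
    hence "mutate k B i j = - B i j" "mutate k B j i = - B j i" by (auto simp: mut_row mut_col)
    thus ?thesis using s[rule_format, of i j] by linarith
  next
    case False
    have e: "B j i = - B i j" "B k i = - B i k" "B j k = - B k j" by (rule s[rule_format])+
    show ?thesis using False by (simp add: mut_off e algebra_simps)
  qed
qed

lemma skew_Qseq: "skew B \<Longrightarrow> skew (Qseq B m n)"
  by (induction n) (auto intro: skew_mutate)

lemma mutate_neg: "skew B \<Longrightarrow> mutate k (\<lambda>i j. - B i j) = (\<lambda>i j. - mutate k B i j)"
proof (intro ext)
  fix i j assume s: "skew B"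
  show "mutate k (\<lambda>i j. - B i j) i j = - mutate k B i j"
  proof (cases "i = k \<or> j = k")
    case True thus ?thesis by (auto simp: mut_row mut_col)
  next
    case False
    hence e: "mutate k (\<lambda>i j. - B i j) i j = - B i j + max (- B i k) 0 * max (- B k j) 0 - max (- B j k) 0 * max (- B k i) 0"
      "mutate k B i j = B i j + max (B i k) 0 * max (B k j) 0 - max (B j k) 0 * max (B k i) 0"
      by (simp_all add: mut_off)
    have "B j k = - B k j" "B k i = - B i k" using s unfolding skew_def by blast+
    thus ?thesis unfolding e by (simp add: algebra_simps)
  qed
qed

lemma Qseq_neg: "skew B \<Longrightarrow> Qseq (\<lambda>i j. - B i j) m n = (\<lambda>i j. - Qseq B m n i j)"
proof (induction n)
  case 0 show ?case by simp
next
  case (Suc n)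
  have "skew (Qseq B m n)" using skew_Qseq Suc.prems by blast
  thus ?case using Suc by (simp add: mutate_neg)
qed

lemma restrict_mutate: "k \<in> S \<Longrightarrow> restrict_q S (mutate k B) = mutate k (restrict_q S B)"
  unfolding restrict_q_def mutate_def by (simp only: int_arrows) (auto simp: fun_eq_iff)

lemma Qseq_fold: "fold mutate (map m [0..<n]) B = Qseq B m n"
  by (induction n) auto

lemma restrict_Qseq: "\<forall>n. m n \<in> S \<Longrightarrow> restrict_q S (Qseq B m n) = Qseq (restrict_q S B) m n"
  by (induction n) (auto simp: restrict_mutate)

lemma abundant_all:
  assumes "mutation_abundant Mu (restrict_q Mu B)" "\<forall>n. m n \<in> Mu"
  shows "i \<in> Mu \<Longrightarrow> j \<in> Mu \<Longrightarrow> i \<noteq> j \<Longrightarrow> \<bar>Qseq B m n i j\<bar> \<ge> 2"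
proof -
  assume ij: "i \<in> Mu" "j \<in> Mu" "i \<noteq> j"
  have "set (map m [0..<n]) \<subseteq> Mu" using assms(2) by auto
  hence "\<bar>mutate_list (map m [0..<n]) (restrict_q Mu B) i j\<bar> \<ge> 2"
    using assms(1) ij unfolding mutation_abundant_def by blast
  moreover have "mutate_list (map m [0..<n]) (restrict_q Mu B) = restrict_q Mu (Qseq B m n)"
    unfolding mutate_list_def Qseq_fold using restrict_Qseq[OF assms(2)] by simp
  ultimately show ?thesis using ij unfolding restrict_q_def by simp
qed

definition cyc3 :: "('v \<Rightarrow> 'v \<Rightarrow> int) \<Rightarrow> 'v \<Rightarrow> 'v \<Rightarrow> 'v \<Rightarrow> bool" where
  "cyc3 B k i j \<longleftrightarrow> B k i > 0 \<and> B i j > 0 \<and> B j k > 0"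
definition CYC :: "'v set \<Rightarrow> ('v \<Rightarrow> 'v \<Rightarrow> int) \<Rightarrow> bool" where
  "CYC S B \<longleftrightarrow> (\<exists>k\<in>S. \<exists>i\<in>S. \<exists>j\<in>S. cyc3 B k i j)"
definition Rel :: "'v set \<Rightarrow> ('v \<Rightarrow> 'v \<Rightarrow> int) \<Rightarrow> ('v \<times> 'v) set" where
  "Rel S B = {(x,y). x \<in> S \<and> y \<in> S \<and> B x y > 0}"
definition outn :: "'v set \<Rightarrow> ('v \<Rightarrow> 'v \<Rightarrow> int) \<Rightarrow> 'v \<Rightarrow> 'v" where
  "outn S B k = (SOME i. i \<in> S \<and> B k i > 0)"
definition inn :: "'v set \<Rightarrow> ('v \<Rightarrow> 'v \<Rightarrow> int) \<Rightarrow> 'v \<Rightarrow> 'v" where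
  "inn S B k = (SOME j. j \<in> S \<and> B j k > 0)"

lemma three_eq:
  assumes "card S = 3" "a \<in> S" "b \<in> S" "c \<in> S" "a \<noteq> b" "a \<noteq> c" "b \<noteq> c"
  shows "S = {a,b,c}"
proof -
  have "finite S" using assms(1) by (metis card.infinite zero_neq_numeral)
  moreover have "{a,b,c} \<subseteq> S" using assms by auto
  moreover have "card {a,b,c} = 3" using assms by simp
  ultimately show ?thesis using assms(1) card_subset_eq by metis
qed

lemma three_ex1:
  assumes "card S = 3" "a \<in> S"
  shows "\<exists>b c. S = {a,b,c} \<and> a \<noteq> b \<and> a \<noteq> c \<and> b \<noteq> c"
proof -
  from card_3_iff[THEN iffD1, OF assms(1)]
  obtain x y z where S: "S = {x,y,z}" "x \<noteq> y" "y \<noteq> z" "x \<noteq> z"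
    by (elim exE conjE)
  have "a = x \<or> a = y \<or> a = z" using assms(2) S by blast
  thus ?thesis
  proof (elim disjE)
    assume "a = x" thus ?thesis using S by (intro exI[of _ y] exI[of _ z]) auto
  next
    assume "a = y" thus ?thesis using S by (intro exI[of _ x] exI[of _ z]) auto
  next
    assume "a = z" thus ?thesis using S by (intro exI[of _ x] exI[of _ y]) auto
  qed
qed

lemma three_ex2:
  assumes "card S = 3" "a \<in> S" "b \<in> S" "a \<noteq> b"
  shows "\<exists>c. S = {a,b,c} \<and> c \<noteq> a \<and> c \<noteq> b"
proof -
  obtain p q where S: "S = {a,p,q}" "a \<noteq> p" "a \<noteq> q" "p \<noteq> q"
    using three_ex1[OF assms(1,2)] by blast
  have "b = p \<or> b = q" using assms(3,4) S by blast
  thus ?thesis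
  proof (elim disjE)
    assume "b = p" thus ?thesis using S by (intro exI[of _ q]) auto
  next
    assume "b = q" thus ?thesis using S by (intro exI[of _ p]) auto
  qed
qed

lemma cyc3_rot: "cyc3 B k i j \<longleftrightarrow> cyc3 B i j k"
  unfolding cyc3_def by auto

lemma cyc3_dist: "skew B \<Longrightarrow> cyc3 B k i j \<Longrightarrow> k \<noteq> i \<and> i \<noteq> j \<and> j \<noteq> k"
proof -
  assume s: "skew B" and c: "cyc3 B k i j"
  have "B k k = 0" "B i i = 0" "B j j = 0" using skew_diag[OF s] by auto
  thus ?thesis using c unfolding cyc3_def by auto
qed

lemma cyc_notacyc: "CYC S B \<Longrightarrow> \<not> acyclic (Rel S B)"
proof -
  assume "CYC S B"
  then obtain k i j where kij: "k \<in> S" "i \<in> S" "j \<in> S" "cyc3 B k i j" unfolding CYC_def by blast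
  hence "(k,i) \<in> Rel S B" "(i,j) \<in> Rel S B" "(j,k) \<in> Rel S B" unfolding Rel_def cyc3_def by auto
  hence "(k,k) \<in> (Rel S B)\<^sup>+" by (meson trancl.trancl_into_trancl trancl.r_into_trancl)
  thus ?thesis unfolding acyclic_def by blast
qed

lemma notcyc_acyc:
  assumes sk: "skew B" and fin: "finite S" and nz: "\<forall>i\<in>S. \<forall>j\<in>S. i \<noteq> j \<longrightarrow> B i j \<noteq> 0"
    and nc: "\<not> CYC S B"
  shows "acyclic (Rel S B)"
proof -
  define h where "h x = card {z \<in> S. B z x > 0}" for x
  have st: "h x < h y" if "(x,y) \<in> Rel S B" for x y
  proof -
    have xy: "x \<in> S" "y \<in> S" "B x y > 0" using that unfolding Rel_def by auto
    have sub: "{z \<in> S. B z x > 0} \<subseteq> {z \<in> S. B z y > 0}"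
    proof
      fix z assume z: "z \<in> {z \<in> S. B z x > 0}"
      hence zS: "z \<in> S" and zx: "B z x > 0" by auto
      have "z \<noteq> y"
      proof
        assume "z = y"
        hence "B y x > 0" using zx by simp
        moreover have "B y x = - B x y" using sk unfolding skew_def by blast
        ultimately show False using xy by simp
      qed
      hence ne: "B z y \<noteq> 0" using nz zS xy by blast
      have "\<not> B y z > 0"
      proof
        assume "B y z > 0"
        hence "cyc3 B z x y" using zx xy unfolding cyc3_def by simp
        thus False using nc zS xy unfolding CYC_def by blast
      qed
      moreover have "B y z = - B z y" using sk unfolding skew_def by blast
      ultimately have "B z y > 0" using ne by linarith
      thus "z \<in> {z \<in> S. B z y > 0}" using zS by simp
    qed
    have "x \<in> {z \<in> S. B z y > 0}" using xy by simp
    moreover have "x \<notin> {z \<in> S. B z x > 0}" using skew_diag[OF sk, of x] by simp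
    ultimately have "{z \<in> S. B z x > 0} \<subset> {z \<in> S. B z y > 0}" using sub by blast
    thus ?thesis unfolding h_def using fin by (simp add: psubset_card_mono)
  qed
  have "h a < h b" if "(a,b) \<in> (Rel S B)\<^sup>+" for a b
    using that
  proof (induction rule: trancl_induct)
    case (base y) thus ?case using st by blast
  next
    case (step y z) thus ?case using st by (meson order.strict_trans)
  qed
  thus ?thesis unfolding acyclic_def by blast
qed

lemma cyc_nb:
  assumes sk: "skew B" and c3: "card S = 3" and cy: "CYC S B" and k: "k \<in> S"
  shows "\<exists>i j. S = {k,i,j} \<and> cyc3 B k i j"
proof -
  obtain a b c where abc: "a \<in> S" "b \<in> S" "c \<in> S" "cyc3 B a b c" using cy unfolding CYC_def by blast
  have d: "a \<noteq> b" "b \<noteq> c" "c \<noteq> a" using cyc3_dist[OF sk abc(4)] by auto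
  have S: "S = {a,b,c}" using three_eq[OF c3 abc(1-3)] d by auto
  have r1: "cyc3 B b c a" "cyc3 B c a b" using abc(4) cyc3_rot by metis+
  have "k = a \<or> k = b \<or> k = c" using k S by auto
  thus ?thesis
  proof (elim disjE)
    assume "k = a" thus ?thesis using S abc(4) by (intro exI[of _ b] exI[of _ c]) simp
  next
    assume "k = b" thus ?thesis using S r1(1) by (intro exI[of _ c] exI[of _ a]) (simp add: insert_commute)
  next
    assume "k = c" thus ?thesis using S r1(2) by (intro exI[of _ a] exI[of _ b]) (simp add: insert_commute)
  qed
qed

lemma nb_eq:
  assumes sk: "skew B" and S: "S = {k,i,j}" and c: "cyc3 B k i j"
  shows "outn S B k = i" "inn S B k = j"
proof -
  have d: "k \<noteq> i" "i \<noteq> j" "j \<noteq> k" using cyc3_dist[OF sk c] by auto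
  have bki: "B k i > 0" "B i j > 0" "B j k > 0" using c unfolding cyc3_def by auto
  have ss: "B i k = - B k i" "B k j = - B j k" "B j i = - B i j" using sk unfolding skew_def by blast+
  show "outn S B k = i" unfolding outn_def
  proof (rule some_equality)
    show "i \<in> S \<and> B k i > 0" using S bki by simp
  next
    fix v assume v: "v \<in> S \<and> B k v > 0"
    hence "v = k \<or> v = i \<or> v = j" using S by auto
    thus "v = i" using v skew_diag[OF sk, of k] ss bki by auto
  qed
  show "inn S B k = j" unfolding inn_def
  proof (rule some_equality)
    show "j \<in> S \<and> B j k > 0" using S bki by simp
  next
    fix v assume v: "v \<in> S \<and> B v k > 0"
    hence "v = k \<or> v = i \<or> v = j" using S by auto
    thus "v = j" using v skew_diag[OF sk, of k] ss bki by auto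
  qed
qed

lemma cyc_has_in:
  assumes "skew B" "card S = 3" "CYC S B" "k \<in> S"
  shows "\<exists>j\<in>S. B j k > 0"
  using cyc_nb[OF assms] unfolding cyc3_def by auto

lemma row_step_nz:
  assumes sk: "skew B" and fk: "f \<noteq> k" and kS: "k \<in> S" and z: "\<forall>v\<in>S. mutate k B f v = 0"
  shows "\<forall>v\<in>S. B f v = 0"
proof
  have "mutate k B f k = - B f k" by (rule mut_col)
  hence bk: "B f k = 0" using z kS by simp
  have bk2: "B k f = 0" using sk bk unfolding skew_def by (metis neg_0_equal_iff_equal)
  fix v assume v: "v \<in> S"
  show "B f v = 0"
  proof (cases "v = k")
    case True thus ?thesis using bk by simp
  next
    case False
    have "mutate k B f v = B f v" using mut_off[OF fk False, of B] bk bk2 by simp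
    thus ?thesis using z v by simp
  qed
qed

lemma row_nz_all:
  assumes sk: "skew B" and fS: "f \<notin> S" and mS: "\<forall>n. m n \<in> S" and nz: "\<exists>v\<in>S. B f v \<noteq> 0"
  shows "\<exists>v\<in>S. Qseq B m n f v \<noteq> 0"
proof (induction n)
  case 0 thus ?case using nz by simp
next
  case (Suc n)
  show ?case
  proof (rule ccontr)
    assume "\<not> (\<exists>v\<in>S. Qseq B m (Suc n) f v \<noteq> 0)"
    hence "\<forall>v\<in>S. mutate (m n) (Qseq B m n) f v = 0" by simp
    hence "\<forall>v\<in>S. Qseq B m n f v = 0"
      using row_step_nz[OF skew_Qseq[OF sk]] fS mS by (metis)
    thus False using Suc by blast
  qed
qed

lemma acyc_row:
  fixes B :: "'v \<Rightarrow> 'v \<Rightarrow> int"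
  assumes sk: "skew B" and c3: "card S = 3" and mS: "\<forall>n. m n \<in> S" and fS: "f \<notin> S"
    and ab: "\<And>n i j. i \<in> S \<Longrightarrow> j \<in> S \<Longrightarrow> i \<noteq> j \<Longrightarrow> \<bar>Qseq B m n i j\<bar> \<ge> 2"
    and src: "\<And>n v. v \<in> S \<Longrightarrow> v \<noteq> m n \<Longrightarrow> Qseq B m n (m n) v > 0"
    and nz0: "\<exists>v\<in>S. B f v \<noteq> 0"
  shows "\<exists>N. \<forall>n\<ge>N. \<forall>v\<in>S. (v \<noteq> m (Suc (Suc n)) \<longrightarrow> Qseq B m n f v > 0)
                          \<and> (v = m (Suc (Suc n)) \<longrightarrow> Qseq B m n f v < 0)"
proof -
  define Q where "Q = Qseq B m"
  have skQ: "skew (Q n)" for n unfolding Q_def using skew_Qseq[OF sk] .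
  have Qs: "Q (Suc n) = mutate (m n) (Q n)" for n unfolding Q_def by simp
  have sw: "Q n i j = - Q n j i" for n i j using skQ[of n] unfolding skew_def by blast
  have fm: "f \<noteq> m n" for n using fS mS by metis
  have srcQ: "v \<in> S \<Longrightarrow> v \<noteq> m n \<Longrightarrow> Q n (m n) v > 0" for n v unfolding Q_def using src by blast
  have srcstep: "Q (Suc n) f v = Q n f v + max (Q n f (m n)) 0 * Q n (m n) v"
    if "v \<in> S" "v \<noteq> m n" for n v
  proof -
    have p: "Q n (m n) v > 0" using srcQ that by blast
    hence "max (Q n v (m n)) 0 = 0" using sw[of n v "m n"] by simp
    moreover have "max (Q n (m n) v) 0 = Q n (m n) v" using p by simp
    ultimately show ?thesis unfolding Qs using mut_off[OF fm that(2), of "Q n"] by simp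
  qed
  have Qm: "Q (Suc n) f (m n) = - Q n f (m n)" for n unfolding Qs by (rule mut_col)
  have Qmm: "Q (Suc n) (m n) v = - Q n (m n) v" for n v unfolding Qs by (rule mut_row)
  have d1: "m (Suc n) \<noteq> m n" for n
  proof
    assume eq: "m (Suc n) = m n"
    obtain v w where vw: "S = {m n, v, w}" "m n \<noteq> v" "m n \<noteq> w" "v \<noteq> w"
      using three_ex1[OF c3, of "m n"] mS by blast
    have "Q (Suc n) (m (Suc n)) v > 0" using srcQ[of v "Suc n"] vw eq by simp
    moreover have "Q n (m n) v > 0" using srcQ[of v n] vw by simp
    ultimately show False using Qmm[of n v] eq by simp
  qed
  have d2: "m (Suc (Suc n)) \<noteq> m n" for n
  proof
    assume eq: "m (Suc (Suc n)) = m n"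
    obtain w where w: "S = {m n, m (Suc n), w}" "w \<noteq> m n" "w \<noteq> m (Suc n)"
      using three_ex2[OF c3, of "m n" "m (Suc n)"] mS d1[of n] by metis
    have wS: "w \<in> S" using w by simp
    have "Q (Suc (Suc n)) (m n) w > 0" using srcQ[OF wS, of "Suc (Suc n)"] w eq by simp
    moreover have "Q (Suc (Suc n)) (m n) w = Q (Suc n) (m n) w"
    proof -
      have a: "Q (Suc n) (m (Suc n)) (m n) > 0" using srcQ[of "m n" "Suc n"] mS d1[of n] by metis
      have b: "Q (Suc n) (m (Suc n)) w > 0" using srcQ[OF wS, of "Suc n"] w by simp
      have "max (Q (Suc n) (m n) (m (Suc n))) 0 = 0" using a sw[of "Suc n" "m n" "m (Suc n)"] by simp
      moreover have "max (Q (Suc n) w (m (Suc n))) 0 = 0" using b sw[of "Suc n" w "m (Suc n)"] by simp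
      moreover have "m n \<noteq> m (Suc n)" using d1[of n] by simp
      ultimately show ?thesis
        unfolding Qs[of "Suc n"] using mut_off[of "m n" "m (Suc n)" w "Q (Suc n)"] w by simp
    qed
    moreover have "Q (Suc n) (m n) w = - Q n (m n) w" by (rule Qmm)
    moreover have "Q n (m n) w > 0" using srcQ[OF wS, of n] w by simp
    ultimately show False by simp
  qed
  have S3: "S = {m n, m (Suc n), m (Suc (Suc n))}" for n
    using three_eq[OF c3] mS d1[of n] d1[of "Suc n"] d2[of n] by metis
  have p3: "m (Suc (Suc (Suc n))) = m n" for n
  proof -
    have "m (Suc (Suc (Suc n))) \<in> S" using mS by blast
    thus ?thesis using S3[of n] d1[of "Suc (Suc n)"] d2[of "Suc n"] by auto
  qed
  define e where "e n = Q n f (m n)" for n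
  define A where "A n = Q (Suc n) (m (Suc n)) (m n)" for n
  define C where "C n = Q (Suc (Suc n)) (m (Suc (Suc n))) (m n)" for n
  have pos2: "Q n i j > 0 \<Longrightarrow> i \<in> S \<Longrightarrow> j \<in> S \<Longrightarrow> Q n i j \<ge> 2" for n i j
    using ab[of i j n] skew_diag[OF skQ[of n], of i] unfolding Q_def by (cases "i = j") auto
  have wA: "A n \<ge> 2" for n
    unfolding A_def using pos2 srcQ[of "m n" "Suc n"] mS d1[of n] by metis
  have wC: "C n \<ge> 2" for n
    unfolding C_def using pos2 srcQ[of "m n" "Suc (Suc n)"] mS d2[of n] by metis
  have st1: "Q (Suc (Suc n)) f (m n) = - e n + max (e (Suc n)) 0 * A n" for n
    using srcstep[of "m n" "Suc n"] mS d1[of n] Qm[of n] unfolding e_def A_def by (metis add.commute)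
  have rec: "e (n+3) = - e n + A n * max (e (n+1)) 0 + C n * max (e (n+2)) 0" for n
  proof -
    have "e (n+3) = Q (Suc (Suc (Suc n))) f (m n)" unfolding e_def using p3[of n] by (simp add: eval_nat_numeral)
    also have "\<dots> = Q (Suc (Suc n)) f (m n) + max (e (Suc (Suc n))) 0 * C n"
      using srcstep[of "m n" "Suc (Suc n)"] mS d2[of n] unfolding e_def C_def by (metis)
    finally show ?thesis using st1[of n] by (simp add: eval_nat_numeral algebra_simps)
  qed
  have nz: "\<not> (e n = 0 \<and> e (n+1) = 0 \<and> e (n+2) = 0)" for n
  proof
    assume z: "e n = 0 \<and> e (n+1) = 0 \<and> e (n+2) = 0"
    have z0: "Q n f (m n) = 0" using z unfolding e_def by simp
    have z1: "Q n f (m (Suc n)) = 0"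
    proof -
      have "Q (Suc n) f (m (Suc n)) = Q n f (m (Suc n))"
        using srcstep[of "m (Suc n)" n] mS d1[of n] z0 by simp
      thus ?thesis using z unfolding e_def by simp
    qed
    have z2: "Q n f (m (Suc (Suc n))) = 0"
    proof -
      have "Q (Suc (Suc n)) f (m (Suc (Suc n))) = Q (Suc n) f (m (Suc (Suc n)))"
        using srcstep[of "m (Suc (Suc n))" "Suc n"] mS d1[of "Suc n"] z unfolding e_def by simp
      also have "\<dots> = Q n f (m (Suc (Suc n)))"
        using srcstep[of "m (Suc (Suc n))" n] mS d2[of n] z0 by simp
      finally show ?thesis using z unfolding e_def by (simp add: eval_nat_numeral)
    qed
    have "\<forall>v\<in>S. Q n f v = 0" using S3[of n] z0 z1 z2 by auto
    thus False using row_nz_all[OF sk fS mS nz0, of n] unfolding Q_def by blast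
  qed
  obtain N where N: "\<forall>n\<ge>N. 1 \<le> e n \<and> e n < e (Suc n)"
    using acyc_seq[OF wA wC rec nz] by blast
  show ?thesis
  proof (intro exI[of _ "N+2"] allI impI ballI)
    fix n v assume n: "N + 2 \<le> n" and v: "v \<in> S"
    define k where "k = n - 2"
    have k: "n = Suc (Suc k)" "k \<ge> N" using n unfolding k_def by auto
    have ek: "1 \<le> e k" "e k < e (Suc k)" "1 \<le> e (Suc (Suc k))" using N k by auto
    have a2: "A k * e (Suc k) \<ge> 2 * e (Suc k)" using h1[OF wA[of k], of "e (Suc k)"] ek by simp
    have P1: "Q n f (m n) > 0" using ek k unfolding e_def by simp
    have a3: "max (e (Suc k)) 0 * A k \<ge> 2 * e (Suc k)" using a2 ek by (simp add: mult.commute)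
    have P2: "Q n f (m k) > 0" using st1[of k] ek a3 unfolding k(1) by linarith
    have P3: "Q n f (m (Suc k)) < 0" using Qm[of "Suc k"] ek k unfolding e_def by simp
    have mk: "m (Suc (Suc n)) = m (Suc k)" "m (Suc n) = m k" using p3[of "Suc k"] p3[of k] k by simp_all
    have vS: "v = m n \<or> v = m (Suc n) \<or> v = m (Suc (Suc n))" using S3[of n] v by auto
    have dd: "m n \<noteq> m (Suc (Suc n))" "m (Suc n) \<noteq> m (Suc (Suc n))" using d2[of n] d1[of "Suc n"] by auto
    show "(v \<noteq> m (Suc (Suc n)) \<longrightarrow> Qseq B m n f v > 0) \<and> (v = m (Suc (Suc n)) \<longrightarrow> Qseq B m n f v < 0)"
      using vS P1 P2 P3 mk dd unfolding Q_def by auto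
  qed
qed

lemma finite_eventually:
  fixes R :: "'a \<Rightarrow> nat \<Rightarrow> bool"
  assumes "finite F" and "\<forall>f\<in>F. \<exists>N. \<forall>n\<ge>N. R f n"
  shows "\<exists>N. \<forall>n\<ge>N. \<forall>f\<in>F. R f n"
  using assms
proof (induction F rule: finite_induct)
  case empty thus ?case by simp
next
  case (insert x F)
  have "\<forall>f\<in>F. \<exists>N. \<forall>n\<ge>N. R f n" using insert.prems by simp
  hence "\<exists>N. \<forall>n\<ge>N. \<forall>f\<in>F. R f n" by (rule insert.IH)
  then obtain N1 where N1: "\<forall>n\<ge>N1. \<forall>f\<in>F. R f n" by (elim exE)
  have "\<exists>N. \<forall>n\<ge>N. R x n" using insert.prems by simp
  then obtain N2 where N2: "\<forall>n\<ge>N2. R x n" by (elim exE)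
  show ?case
  proof (intro exI[of _ "max N1 N2"] allI impI ballI)
    fix n f assume n: "max N1 N2 \<le> n" and f: "f \<in> insert x F"
    have n12: "N1 \<le> n" "N2 \<le> n" using n by (auto simp: max_def split: if_splits)
    show "R f n"
    proof (cases "f = x")
      case True thus ?thesis using N2 n12 by blast
    next
      case False hence "f \<in> F" using f by blast
      thus ?thesis using N1 n12 by blast
    qed
  qed
qed

lemma sc_from_pattern:
  assumes sk: "skew Bq" and fr: "V - Mu \<noteq> {}"
    and pat: "\<forall>v\<in>Mu. \<forall>f\<in>V - Mu. (P v \<longrightarrow> Bq f v > 0) \<and> (\<not> P v \<longrightarrow> Bq f v < 0)"
  shows "sign_coherent V Mu Bq"
  unfolding sign_coherent_def
proof
  fix v assume v: "v \<in> Mu"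
  obtain f0 where f0: "f0 \<in> V - Mu" using fr by blast
  have sw: "Bq v f = - Bq f v" for f using sk unfolding skew_def by blast
  show "red V Mu Bq v \<or> green V Mu Bq v"
  proof (cases "P v")
    case True
    hence "Bq f0 v > 0" using pat v f0 by blast
    hence "adjacent Bq v f0" unfolding adjacent_def using sw[of f0] by simp
    moreover have "\<forall>f\<in>V - Mu. Bq f v \<ge> 0"
    proof
      fix f assume "f \<in> V - Mu"
      hence "Bq f v > 0" using pat v True by blast
      thus "Bq f v \<ge> 0" by simp
    qed
    ultimately show ?thesis unfolding red_def using f0 by blast
  next
    case False
    hence "Bq f0 v < 0" using pat v f0 by blast
    hence "adjacent Bq v f0" unfolding adjacent_def using sw[of f0] by simp
    moreover have "\<forall>f\<in>V - Mu. Bq v f \<ge> 0"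
    proof
      fix f assume "f \<in> V - Mu"
      hence "Bq f v < 0" using pat v False by blast
      thus "Bq v f \<ge> 0" using sw[of f] by simp
    qed
    ultimately show ?thesis unfolding green_def using f0 by blast
  qed
qed

definition PCc :: "'v set \<Rightarrow> (nat \<Rightarrow> 'v \<Rightarrow> 'v \<Rightarrow> int) \<Rightarrow> (nat \<Rightarrow> 'v) \<Rightarrow> nat \<Rightarrow> 'v \<Rightarrow> bool" where
  "PCc S Q m n v \<longleftrightarrow> Q n v (m (n-1)) > 0 \<or> (v = m (n-1) \<and> m (n-1) = outn S (Q (n-1)) (m (n-2)))"

locale QS =
  fixes V Mu :: "'v set" and B :: "'v \<Rightarrow> 'v \<Rightarrow> int" and m :: "nat \<Rightarrow> 'v"
  assumes isq: "is_quiver V Mu B"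
    and con: "connected_quiver V Mu B"
    and c3: "card Mu = 3"
    and fr: "V - Mu \<noteq> {}"
    and ab: "mutation_abundant Mu (restrict_q Mu B)"
    and mMu: "\<forall>n. m n \<in> Mu"
    and red: "reduced_seq m"
    and wb: "weakly_balanced Mu m"
    and cp: "cycle_preserving_seq Mu B m"
begin

abbreviation "Q \<equiv> Qseq B m"

lemma skB: "skew B" using isq unfolding is_quiver_def skew_def by blast
lemma skQ: "skew (Q n)" using skew_Qseq[OF skB] .
lemma sw: "Q n i j = - Q n j i" using skQ[of n] unfolding skew_def by blast
lemma abQ: "i \<in> Mu \<Longrightarrow> j \<in> Mu \<Longrightarrow> i \<noteq> j \<Longrightarrow> \<bar>Q n i j\<bar> \<ge> 2"
  using abundant_all[OF ab mMu] by blast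
lemma pos2: "i \<in> Mu \<Longrightarrow> j \<in> Mu \<Longrightarrow> Q n i j > 0 \<Longrightarrow> Q n i j \<ge> 2"
  using abQ[of i j n] skew_diag[OF skQ[of n], of i] by (cases "i = j") auto
lemma nzQ: "i \<in> Mu \<Longrightarrow> j \<in> Mu \<Longrightarrow> i \<noteq> j \<Longrightarrow> Q n i j \<noteq> 0"
  using abQ[of i j n] by auto
lemma finMu: "finite Mu" using c3 by (metis card.infinite zero_neq_numeral)
lemma finV: "finite V" using isq unfolding is_quiver_def by blast
lemma redm: "m (Suc n) \<noteq> m n" using red unfolding reduced_seq_def by metis
lemma Qs: "Q (Suc n) = mutate (m n) (Q n)" by simp
lemma fnotm: "f \<in> V - Mu \<Longrightarrow> f \<noteq> m n" using mMu by auto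

lemma nz0: "f \<in> V - Mu \<Longrightarrow> \<exists>v\<in>Mu. B f v \<noteq> 0"
  using con unfolding connected_quiver_def adjacent_def by blast

lemma rowNZ: "f \<in> V - Mu \<Longrightarrow> \<exists>v\<in>Mu. Q n f v \<noteq> 0"
  using row_nz_all[OF skB _ mMu nz0] by blast

lemma cp_step:
  assumes "CYC Mu (Q n)" shows "CYC Mu (Q (Suc n))"
proof -
  obtain i k where ik: "Mu = {m n, i, k}" "m n \<noteq> i" "m n \<noteq> k" "i \<noteq> k"
    using three_ex1[OF c3, of "m n"] mMu by blast
  have S: "{i, m n, k} = Mu" using ik by auto
  have relr: "{(x, y). x \<in> Mu \<and> y \<in> Mu \<and> restrict_q Mu M x y > 0} = Rel Mu M" for M
    unfolding Rel_def restrict_q_def by auto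
  have "cycle_preserving Mu {} (restrict_q Mu (Q n)) (m n)" using cp unfolding cycle_preserving_seq_def by blast
  hence impl: "oriented_3cycle {} (restrict_q Mu (Q n)) Mu \<Longrightarrow> oriented_3cycle {} (mutate (m n) (restrict_q Mu (Q n))) Mu"
    unfolding cycle_preserving_def using S by (metis order_refl)
  have "oriented_3cycle {} (restrict_q Mu (Q n)) Mu"
    unfolding oriented_3cycle_def relr using c3 cyc_notacyc[OF assms] by simp
  hence "oriented_3cycle {} (mutate (m n) (restrict_q Mu (Q n))) Mu" by (rule impl)
  moreover have "mutate (m n) (restrict_q Mu (Q n)) = restrict_q Mu (Q (Suc n))"
    using restrict_mutate[of "m n" Mu "Q n"] mMu by simp
  ultimately have "oriented_3cycle {} (restrict_q Mu (Q (Suc n))) Mu" by metis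
  hence "\<not> acyclic {(x, y). x \<in> Mu \<and> y \<in> Mu \<and> restrict_q Mu (Q (Suc n)) x y > 0}"
    unfolding oriented_3cycle_def by blast
  hence "\<not> acyclic (Rel Mu (Q (Suc n)))" unfolding relr .
  thus ?thesis using notcyc_acyc[OF skQ finMu] nzQ by blast
qed

lemma wb_alt: "\<not> (\<forall>s\<ge>s0. m (Suc (Suc s)) = m s)"
proof
  assume h: "\<forall>s\<ge>s0. m (Suc (Suc s)) = m s"
  obtain c where c: "Mu = {m s0, m (Suc s0), c}" "c \<noteq> m s0" "c \<noteq> m (Suc s0)"
    using three_ex2[OF c3, of "m s0" "m (Suc s0)"] mMu redm[of s0] by metis
  have two: "m (s0 + d) = m s0 \<or> m (s0 + d) = m (Suc s0)" for d
  proof (induction d rule: less_induct)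
    case (less d)
    show ?case
    proof (cases "d < 2")
      case True thus ?thesis by (cases d) auto
    next
      case False
      define d' where "d' = d - 2"
      have d': "d = Suc (Suc d')" using False unfolding d'_def by simp
      have "m (s0 + d) = m (s0 + d')" using h[rule_format, of "s0 + d'"] d' by simp
      thus ?thesis using less[of d'] d' by simp
    qed
  qed
  have "{n. m n = c} \<subseteq> {..<s0}"
  proof
    fix n assume "n \<in> {n. m n = c}"
    hence mc: "m n = c" by simp
    show "n \<in> {..<s0}"
    proof (rule ccontr)
      assume "n \<notin> {..<s0}"
      hence "n = s0 + (n - s0)" by simp
      hence "m n = m s0 \<or> m n = m (Suc s0)" using two[of "n - s0"] by metis
      thus False using mc c by auto
    qed
  qed
  hence "finite {n. m n = c}" using finite_subset by blast
  moreover have "c \<in> Mu" using c by simp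
  ultimately show False using wb unfolding weakly_balanced_def by blast
qed

end

context QS begin

lemma cyc_all: assumes "CYC Mu (Q c0)" "c0 \<le> n" shows "CYC Mu (Q n)"
  using assms(2)
proof (induction rule: dec_induct)
  case base thus ?case using assms(1) by simp
next
  case (step k) thus ?case using cp_step by blast
qed

lemma cyc_row:
  assumes cyc: "\<forall>n\<ge>c0. CYC Mu (Q n)" and f: "f \<in> V - Mu"
  shows "\<exists>N. \<forall>n\<ge>N. \<forall>v\<in>Mu. (PCc Mu Q m n v \<longrightarrow> Q n f v > 0) \<and> (\<not> PCc Mu Q m n v \<longrightarrow> Q n f v < 0)"
proof -
  define T where "T t = Suc (t + c0)" for t
  define k where "k t = m (t + c0)" for t
  define i where "i t = outn Mu (Q (T t)) (k t)" for t
  define j where "j t = inn Mu (Q (T t)) (k t)" for t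
  have cT: "CYC Mu (Q (T t))" for t using cyc T_def by (metis le_add2 le_SucI)
  have kMu: "k t \<in> Mu" for t unfolding k_def using mMu by blast
  have fne: "f \<noteq> v" if "v \<in> Mu" for v using f that by blast
  have struct: "Mu = {k t, i t, j t} \<and> cyc3 (Q (T t)) (k t) (i t) (j t)" for t
  proof -
    from cT[of t] obtain i' j' where ij: "Mu = {k t, i', j'}" "cyc3 (Q (T t)) (k t) i' j'"
      using cyc_nb[OF skQ c3 _ kMu] by blast
    have "i t = i'" "j t = j'" unfolding i_def j_def using nb_eq[OF skQ ij] by auto
    thus ?thesis using ij by simp
  qed
  have dist: "k t \<noteq> i t \<and> i t \<noteq> j t \<and> j t \<noteq> k t" for t
    using cyc3_dist[OF skQ] struct by blast
  have iMu: "i t \<in> Mu" and jMu: "j t \<in> Mu" for t using struct[of t] by auto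
  have kS: "k (Suc t) = m (T t)" for t unfolding k_def T_def by simp
  have mT: "m (T t) = i t \<or> m (T t) = j t" for t
  proof -
    have "m (T t) \<noteq> k t" unfolding T_def k_def by (rule redm)
    moreover have "m (T t) \<in> Mu" using mMu by blast
    ultimately show ?thesis using struct[of t] by auto
  qed
  have QT: "Q (T (Suc t)) = mutate (m (T t)) (Q (T t))" for t unfolding T_def by simp
  have c3v: "cyc3 (Q (T t)) (k t) (i t) (j t)" for t using struct by blast
  have pki: "Q (T t) (k t) (i t) > 0" "Q (T t) (i t) (j t) > 0" "Q (T t) (j t) (k t) > 0" for t
    using c3v[of t] unfolding cyc3_def by auto
  have trI: "i (Suc t) = k t \<and> j (Suc t) = j t" if mi: "m (T t) = i t" for t
  proof -
    let ?Q' = "Q (T (Suc t))"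
    have Q': "?Q' = mutate (i t) (Q (T t))" using QT mi by simp
    have a: "?Q' (i t) (k t) > 0" unfolding Q' mut_row using sw pki by (metis neg_less_0_iff_less)
    have b: "?Q' (j t) (i t) > 0" unfolding Q' mut_col using sw pki by (metis neg_less_0_iff_less)
    from cT[of "Suc t"] obtain v where v: "v \<in> Mu" "?Q' v (j t) > 0" using cyc_has_in[OF skQ c3 _ jMu] by blast
    have "v = k t \<or> v = i t \<or> v = j t" using struct[of t] v by auto
    moreover have "v \<noteq> j t" using v skew_diag[OF skQ] by (metis less_irrefl)
    moreover have "v \<noteq> i t" using v b sw by (metis add.inverse_inverse neg_less_0_iff_less not_less_iff_gr_or_eq)
    ultimately have c: "?Q' (k t) (j t) > 0" using v by blast
    have "cyc3 ?Q' (i t) (k t) (j t)" unfolding cyc3_def using a b c by simp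
    moreover have "Mu = {i t, k t, j t}" using struct[of t] by auto
    ultimately show ?thesis using nb_eq[OF skQ] kS mi unfolding i_def j_def by metis
  qed
  have trJ: "i (Suc t) = i t \<and> j (Suc t) = k t" if mj: "m (T t) = j t" for t
  proof -
    let ?Q' = "Q (T (Suc t))"
    have Q': "?Q' = mutate (j t) (Q (T t))" using QT mj by simp
    have a: "?Q' (j t) (i t) > 0" unfolding Q' mut_row using sw pki by (metis neg_less_0_iff_less)
    have b: "?Q' (k t) (j t) > 0" unfolding Q' mut_col using sw pki by (metis neg_less_0_iff_less)
    from cT[of "Suc t"] obtain v where v: "v \<in> Mu" "?Q' v (k t) > 0" using cyc_has_in[OF skQ c3 _ kMu] by blast
    have "v = k t \<or> v = i t \<or> v = j t" using struct[of t] v by auto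
    moreover have "v \<noteq> k t" using v skew_diag[OF skQ] by (metis less_irrefl)
    moreover have "v \<noteq> j t" using v b sw by (metis add.inverse_inverse neg_less_0_iff_less not_less_iff_gr_or_eq)
    ultimately have c: "?Q' (i t) (k t) > 0" using v by blast
    have "cyc3 ?Q' (j t) (i t) (k t)" unfolding cyc3_def using a b c by simp
    moreover have "Mu = {j t, i t, k t}" using struct[of t] by auto
    ultimately show ?thesis using nb_eq[OF skQ] kS mj unfolding i_def j_def by metis
  qed
  define X where "X t = - Q (T t) f (i t)" for t
  define Y where "Y t = Q (T t) f (j t)" for t
  define Z where "Z t = Q (T t) f (k t)" for t
  define A where "A t = Q (T t) (k t) (i t)" for t
  define Bw where "Bw t = Q (T t) (i t) (j t)" for t
  define D where "D t = Q (T t) (j t) (k t)" for t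
  define mi where "mi t = (m (T t) = i t)" for t
  have wA: "A t \<ge> 2" for t unfolding A_def using pos2 kMu iMu pki by blast
  have wB: "Bw t \<ge> 2" for t unfolding Bw_def using pos2 jMu iMu pki by blast
  have wD: "D t \<ge> 2" for t unfolding D_def using pos2 kMu jMu pki by blast
  have fi: "f \<noteq> i t" "f \<noteq> j t" "f \<noteq> k t" for t using fne iMu jMu kMu by blast+
  have HMi: "X (Suc t) = A t * max (X t) 0 - Z t \<and> Y (Suc t) = Y t + Bw t * max (- X t) 0
                 \<and> Z (Suc t) = X t \<and> A (Suc t) = A t \<and> D (Suc t) = Bw t" if "mi t" for t
  proof -
    have mi': "m (T t) = i t" using that unfolding mi_def .
    note tr1 = trI[OF mi', THEN conjunct1] and tr2 = trI[OF mi', THEN conjunct2]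
    have Q': "Q (T (Suc t)) = mutate (i t) (Q (T t))" using QT mi' by simp
    have ks: "k (Suc t) = i t" using kS mi' by simp
    have s1: "Q (T t) (i t) (k t) = - A t" "Q (T t) (j t) (i t) = - Bw t" "Q (T t) (i t) f = X t"
      "Q (T t) f (i t) = - X t"
      unfolding A_def Bw_def X_def
      using sw[of "T t" "i t" "k t"] sw[of "T t" "j t" "i t"] sw[of "T t" "i t" f] by simp_all
    have m0: "max (Q (T t) (i t) (k t)) 0 = 0" "max (Q (T t) (j t) (i t)) 0 = 0" "max (Q (T t) (k t) (i t)) 0 = A t"
      "max (Q (T t) (i t) (j t)) 0 = Bw t"
      using s1 wA[of t] wB[of t] unfolding A_def Bw_def by auto
    have e1: "Q (T (Suc t)) f (k t) = Q (T t) f (k t) + max (Q (T t) f (i t)) 0 * max (Q (T t) (i t) (k t)) 0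
        - max (Q (T t) (k t) (i t)) 0 * max (Q (T t) (i t) f) 0"
      unfolding Q' by (rule mut_off) (use fi[of t] dist[of t] in auto)
    have e2: "Q (T (Suc t)) f (j t) = Q (T t) f (j t) + max (Q (T t) f (i t)) 0 * max (Q (T t) (i t) (j t)) 0
        - max (Q (T t) (j t) (i t)) 0 * max (Q (T t) (i t) f) 0"
      unfolding Q' by (rule mut_off) (use fi[of t] dist[of t] in auto)
    have e3: "Q (T (Suc t)) f (i t) = - Q (T t) f (i t)" unfolding Q' by (rule mut_col)
    have e4: "Q (T (Suc t)) (i t) (k t) = - Q (T t) (i t) (k t)" unfolding Q' by (rule mut_row)
    have e5: "Q (T (Suc t)) (j t) (i t) = - Q (T t) (j t) (i t)" unfolding Q' by (rule mut_col)
    have "X (Suc t) = A t * max (X t) 0 - Z t"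
      unfolding X_def[of "Suc t"] tr1 e1 m0 s1 Z_def using wA[of t] wB[of t] wD[of t] by (simp add: mult.commute)
    moreover have "Y (Suc t) = Y t + Bw t * max (- X t) 0"
      unfolding Y_def[of "Suc t"] tr2 e2 m0 s1 Y_def using wA[of t] wB[of t] wD[of t] by (simp add: mult.commute)
    moreover have "Z (Suc t) = X t" unfolding Z_def[of "Suc t"] ks e3 X_def by simp
    moreover have "A (Suc t) = A t" unfolding A_def[of "Suc t"] ks tr1 e4 s1 by simp
    moreover have "D (Suc t) = Bw t" unfolding D_def[of "Suc t"] ks tr2 e5 s1 by simp
    ultimately show ?thesis by blast
  qed
  have HMj: "X (Suc t) = X t + Bw t * max (- Y t) 0 \<and> Y (Suc t) = D t * max (Y t) 0 + Z t
                 \<and> Z (Suc t) = - Y t \<and> A (Suc t) = Bw t \<and> D (Suc t) = D t" if "\<not> mi t" for t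
  proof -
    have mj': "m (T t) = j t" using that mT unfolding mi_def by blast
    note tr1 = trJ[OF mj', THEN conjunct1] and tr2 = trJ[OF mj', THEN conjunct2]
    have Q': "Q (T (Suc t)) = mutate (j t) (Q (T t))" using QT mj' by simp
    have ks: "k (Suc t) = j t" using kS mj' by simp
    have s1: "Q (T t) (j t) (i t) = - Bw t" "Q (T t) (k t) (j t) = - D t" "Q (T t) (j t) f = - Y t"
      "Q (T t) f (i t) = - X t"
      unfolding D_def Bw_def X_def Y_def
      using sw[of "T t" "j t" "i t"] sw[of "T t" "k t" "j t"] sw[of "T t" "j t" f] by simp_all
    have m0: "max (Q (T t) (j t) (i t)) 0 = 0" "max (Q (T t) (k t) (j t)) 0 = 0" "max (Q (T t) (i t) (j t)) 0 = Bw t"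
      "max (Q (T t) (j t) (k t)) 0 = D t"
      using s1 wB[of t] wD[of t] unfolding D_def Bw_def by auto
    have e1: "Q (T (Suc t)) f (i t) = Q (T t) f (i t) + max (Q (T t) f (j t)) 0 * max (Q (T t) (j t) (i t)) 0
        - max (Q (T t) (i t) (j t)) 0 * max (Q (T t) (j t) f) 0"
      unfolding Q' by (rule mut_off) (use fi[of t] dist[of t] in auto)
    have e2: "Q (T (Suc t)) f (k t) = Q (T t) f (k t) + max (Q (T t) f (j t)) 0 * max (Q (T t) (j t) (k t)) 0
        - max (Q (T t) (k t) (j t)) 0 * max (Q (T t) (j t) f) 0"
      unfolding Q' by (rule mut_off) (use fi[of t] dist[of t] in auto)
    have e3: "Q (T (Suc t)) f (j t) = - Q (T t) f (j t)" unfolding Q' by (rule mut_col)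
    have e4: "Q (T (Suc t)) (j t) (i t) = - Q (T t) (j t) (i t)" unfolding Q' by (rule mut_row)
    have e5: "Q (T (Suc t)) (k t) (j t) = - Q (T t) (k t) (j t)" unfolding Q' by (rule mut_col)
    have "X (Suc t) = X t + Bw t * max (- Y t) 0"
      unfolding X_def[of "Suc t"] tr1 e1 m0 s1 using wA[of t] wB[of t] wD[of t] by (simp add: mult.commute X_def)
    moreover have "Y (Suc t) = D t * max (Y t) 0 + Z t"
      unfolding Y_def[of "Suc t"] tr2 e2 m0 s1 using wA[of t] wB[of t] wD[of t] by (simp add: mult.commute Z_def Y_def)
    moreover have "Z (Suc t) = - Y t" unfolding Z_def[of "Suc t"] ks e3 Y_def by simp
    moreover have "A (Suc t) = Bw t" unfolding A_def[of "Suc t"] ks tr1 e4 s1 by simp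
    moreover have "D (Suc t) = D t" unfolding D_def[of "Suc t"] ks tr2 e5 s1 by simp
    ultimately show ?thesis by blast
  qed
  have nz: "\<not> (X t = 0 \<and> Y t = 0 \<and> Z t = 0)" for t
  proof
    assume z: "X t = 0 \<and> Y t = 0 \<and> Z t = 0"
    have "\<forall>v\<in>Mu. Q (T t) f v = 0"
    proof
      fix v assume "v \<in> Mu"
      hence "v = k t \<or> v = i t \<or> v = j t" using struct[of t] by auto
      thus "Q (T t) f v = 0" using z unfolding X_def Y_def Z_def by auto
    qed
    thus False using rowNZ[OF f, of "T t"] by blast
  qed
  have swt: "\<exists>t'\<ge>t. mi t' \<noteq> mi (Suc t')" for t
  proof (rule ccontr)
    assume "\<not> (\<exists>t'\<ge>t. mi t' \<noteq> mi (Suc t'))"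
    hence h: "\<forall>t'\<ge>t. mi t' = mi (Suc t')" by blast
    have "\<forall>s\<ge>t + c0. m (Suc (Suc s)) = m s"
    proof (intro allI impI)
      fix s assume s: "t + c0 \<le> s"
      define t' where "t' = s - c0"
      have t': "s = t' + c0" "t' \<ge> t" using s unfolding t'_def by auto
      have TS: "T (Suc t') = Suc (Suc s)" unfolding T_def using t' by simp
      have "m (T (Suc t')) = k t'"
      proof (cases "mi t'")
        case True
        hence "mi (Suc t')" using h t' by blast
        hence "m (T (Suc t')) = i (Suc t')" unfolding mi_def .
        thus ?thesis using trI[of t'] True unfolding mi_def by simp
      next
        case False
        hence "\<not> mi (Suc t')" using h t' by blast
        hence "m (T (Suc t')) = j (Suc t')" using mT unfolding mi_def by blast
        thus ?thesis using trJ[of t'] False mT unfolding mi_def by metis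
      qed
      thus "m (Suc (Suc s)) = m s" using TS t' unfolding k_def by simp
    qed
    thus False using wb_alt by blast
  qed
  obtain N where N: "\<forall>t\<ge>N. Ic (X t) (Y t) (Z t) (A t) (D t)"
    using cyc_game[where X=X and Y=Y and Z=Z and A=A and Bw=Bw and D=D and mi=mi, OF wA wB wD HMi HMj nz swt] by blast
  show ?thesis
  proof (intro exI[of _ "N + c0 + 2"] allI impI ballI)
    fix n v assume n: "N + c0 + 2 \<le> n" and v: "v \<in> Mu"
    define t where "t = n - c0 - 2"
    have t: "n = T (Suc t)" "t \<ge> N" using n unfolding t_def T_def by auto
    have I0: "X t \<ge> 1" "Y t \<ge> 1" using N t unfolding Ic_def by auto
    have I1: "X (Suc t) \<ge> 1" "Y (Suc t) \<ge> 1" using N[rule_format, of "Suc t"] t unfolding Ic_def by auto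
    have n1: "n - 1 = T t" "n - 2 = t + c0" using t unfolding T_def by auto
    have km: "m (n - 1) = k (Suc t)" using n1 kS by simp
    have io: "outn Mu (Q (n - 1)) (m (n - 2)) = i t" using n1 unfolding i_def k_def by simp
    have PC: "PCc Mu Q m n v \<longleftrightarrow> Q n v (k (Suc t)) > 0 \<or> (v = k (Suc t) \<and> mi t)"
      unfolding PCc_def km io mi_def using kS by auto
    have st: "Mu = {k (Suc t), i (Suc t), j (Suc t)}" using struct by blast
    have pk: "Q n (k (Suc t)) (i (Suc t)) > 0" "Q n (j (Suc t)) (k (Suc t)) > 0" using pki t by auto
    have dd: "k (Suc t) \<noteq> i (Suc t)" "i (Suc t) \<noteq> j (Suc t)" "j (Suc t) \<noteq> k (Suc t)" using dist by auto
    have vc: "v = k (Suc t) \<or> v = i (Suc t) \<or> v = j (Suc t)" using st v by auto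
    show "(PCc Mu Q m n v \<longrightarrow> Q n f v > 0) \<and> (\<not> PCc Mu Q m n v \<longrightarrow> Q n f v < 0)"
    proof (rule vc[THEN disjE])
      assume vk: "v = k (Suc t)"
      have "Q n v v = 0" using skew_diag[OF skQ] .
      hence PCk: "PCc Mu Q m n v \<longleftrightarrow> mi t" using PC vk by simp
      have zz: "Q n f v = Z (Suc t)" unfolding Z_def vk t by simp
      show ?thesis
      proof (cases "mi t")
        case True thus ?thesis using PCk zz HMi[OF True] I0 by simp
      next
        case False thus ?thesis using PCk zz HMj[OF False] I0 by simp
      qed
    next
      assume "v = i (Suc t) \<or> v = j (Suc t)"
      thus ?thesis
      proof
        assume vi: "v = i (Suc t)"
        have "Q n v (k (Suc t)) < 0" using pk vi sw by (metis neg_less_0_iff_less)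
        hence "\<not> PCc Mu Q m n v" using PC vi dd by auto
        moreover have "Q n f v = - X (Suc t)" unfolding X_def vi t by simp
        ultimately show ?thesis using I1 by simp
      next
        assume vj: "v = j (Suc t)"
        have "PCc Mu Q m n v" using PC vj pk by simp
        moreover have "Q n f v = Y (Suc t)" unfolding Y_def vj t by simp
        ultimately show ?thesis using I1 by simp
      qed
    qed
  qed
qed



lemma src_or_snk:
  assumes nc: "\<forall>n. \<not> CYC Mu (Q n)"
  shows "(\<forall>v\<in>Mu. v \<noteq> m n \<longrightarrow> Q n (m n) v > 0) \<or> (\<forall>v\<in>Mu. v \<noteq> m n \<longrightarrow> Q n v (m n) > 0)"
proof (rule ccontr)
  assume "\<not> ?thesis"
  then obtain p q where p: "p \<in> Mu" "p \<noteq> m n" "\<not> Q n (m n) p > 0"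
    and q: "q \<in> Mu" "q \<noteq> m n" "\<not> Q n q (m n) > 0" by blast
  have mn: "m n \<in> Mu" using mMu by blast
  have "Q n (m n) p \<noteq> 0" using nzQ[OF mn p(1)] p(2) by metis
  hence p1: "Q n p (m n) > 0" using p(3) sw[of n p "m n"] by linarith
  have "Q n q (m n) \<noteq> 0" using nzQ[OF q(1) mn] q(2) by metis
  hence q1: "Q n (m n) q > 0" using q(3) sw[of n "m n" q] by linarith
  have pq: "p \<noteq> q"
  proof
    assume "p = q"
    hence "Q n (m n) p > 0" using q1 by simp
    thus False using p(3) by simp
  qed
  have "\<not> Q n q p > 0"
  proof
    assume "Q n q p > 0"
    hence "cyc3 (Q n) (m n) q p" unfolding cyc3_def using q1 p1 by simp
    thus False using nc mn p q unfolding CYC_def by blast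
  qed
  hence pq1: "Q n p q > 0" using nzQ[OF p(1) q(1) pq, of n] sw[of n q p] by linarith
  let ?Q' = "Q (Suc n)"
  have "?Q' p q = Q n p q + max (Q n p (m n)) 0 * max (Q n (m n) q) 0 - max (Q n q (m n)) 0 * max (Q n (m n) p) 0"
    unfolding Qs by (rule mut_off) (use p q in auto)
  moreover have "max (Q n q (m n)) 0 = 0" using q1 sw[of n q "m n"] by simp
  ultimately have e: "?Q' p q = Q n p q + max (Q n p (m n)) 0 * max (Q n (m n) q) 0" by simp
  have "max (Q n p (m n)) 0 * max (Q n (m n) q) 0 \<ge> 0" by simp
  hence a: "?Q' p q > 0" using pq1 e by linarith
  have b: "?Q' q (m n) > 0" unfolding Qs mut_col using q1 sw[of n q "m n"] by simp
  have c: "?Q' (m n) p > 0" unfolding Qs mut_row using p1 sw[of n "m n" p] by simp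
  have "cyc3 ?Q' p q (m n)" unfolding cyc3_def using a b c by simp
  thus False using nc mn p q unfolding CYC_def by blast
qed

lemma all_src_snk:
  assumes nc: "\<forall>n. \<not> CYC Mu (Q n)"
  shows "(\<forall>n. \<forall>v\<in>Mu. v \<noteq> m n \<longrightarrow> Q n (m n) v > 0) \<or> (\<forall>n. \<forall>v\<in>Mu. v \<noteq> m n \<longrightarrow> Q n v (m n) > 0)"
proof -
  have m1: "m n \<in> Mu" "m (Suc n) \<in> Mu" "m (Suc n) \<noteq> m n" for n using mMu redm by auto
  have srcS: "\<forall>v\<in>Mu. v \<noteq> m (Suc n) \<longrightarrow> Q (Suc n) (m (Suc n)) v > 0"
    if "\<forall>v\<in>Mu. v \<noteq> m n \<longrightarrow> Q n (m n) v > 0" for n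
  proof (rule ccontr)
    assume "\<not> ?thesis"
    hence snk: "\<forall>v\<in>Mu. v \<noteq> m (Suc n) \<longrightarrow> Q (Suc n) v (m (Suc n)) > 0" using src_or_snk[OF nc, of "Suc n"] by blast
    have "Q (Suc n) (m n) (m (Suc n)) > 0" using snk m1[of n] by auto
    moreover have "Q (Suc n) (m n) (m (Suc n)) = - Q n (m n) (m (Suc n))" unfolding Qs by (rule mut_row)
    moreover have "Q n (m n) (m (Suc n)) > 0" using that m1[of n] by auto
    ultimately show False by simp
  qed
  have snkS: "\<forall>v\<in>Mu. v \<noteq> m (Suc n) \<longrightarrow> Q (Suc n) v (m (Suc n)) > 0"
    if "\<forall>v\<in>Mu. v \<noteq> m n \<longrightarrow> Q n v (m n) > 0" for n
  proof (rule ccontr)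
    assume "\<not> ?thesis"
    hence src: "\<forall>v\<in>Mu. v \<noteq> m (Suc n) \<longrightarrow> Q (Suc n) (m (Suc n)) v > 0" using src_or_snk[OF nc, of "Suc n"] by blast
    have "Q (Suc n) (m (Suc n)) (m n) > 0" using src m1[of n] by auto
    moreover have "Q (Suc n) (m (Suc n)) (m n) = - Q n (m (Suc n)) (m n)" unfolding Qs by (rule mut_col)
    moreover have "Q n (m (Suc n)) (m n) > 0" using that m1[of n] by auto
    ultimately show False by simp
  qed
  show ?thesis
  proof (cases "\<forall>v\<in>Mu. v \<noteq> m 0 \<longrightarrow> Q 0 (m 0) v > 0")
    case True
    have "\<forall>v\<in>Mu. v \<noteq> m n \<longrightarrow> Q n (m n) v > 0" for n
      by (induction n) (use True srcS in auto)
    thus ?thesis by blast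
  next
    case False
    hence F: "\<forall>v\<in>Mu. v \<noteq> m 0 \<longrightarrow> Q 0 v (m 0) > 0" using src_or_snk[OF nc, of 0] by blast
    have "\<forall>v\<in>Mu. v \<noteq> m n \<longrightarrow> Q n v (m n) > 0" for n
      by (induction n) (use F snkS in auto)
    thus ?thesis by blast
  qed
qed

end

context QS begin

lemma main_ex: "\<exists>N. \<forall>n\<ge>N. sign_coherent V Mu (Q n)"
proof (cases "\<exists>c0. CYC Mu (Q c0)")
  case True
  then obtain c0 where c0: "CYC Mu (Q c0)" by blast
  hence cyc: "\<forall>n\<ge>c0. CYC Mu (Q n)" using cyc_all by blast
  define R where "R f n \<longleftrightarrow> (\<forall>v\<in>Mu. (PCc Mu Q m n v \<longrightarrow> Q n f v > 0) \<and> (\<not> PCc Mu Q m n v \<longrightarrow> Q n f v < 0))" for f n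
  have "\<forall>f\<in>V - Mu. \<exists>N. \<forall>n\<ge>N. R f n"
  proof
    fix f assume "f \<in> V - Mu"
    from cyc_row[OF cyc this] show "\<exists>N. \<forall>n\<ge>N. R f n" unfolding R_def .
  qed
  from finite_eventually[where R=R, OF _ this] finV
  obtain N where N: "\<forall>n\<ge>N. \<forall>f\<in>V - Mu. R f n" by blast
  show ?thesis
  proof (intro exI[of _ N] allI impI)
    fix n assume "N \<le> n"
    hence "\<forall>v\<in>Mu. \<forall>f\<in>V - Mu. (PCc Mu Q m n v \<longrightarrow> Q n f v > 0) \<and> (\<not> PCc Mu Q m n v \<longrightarrow> Q n f v < 0)"
      using N unfolding R_def by blast
    thus "sign_coherent V Mu (Q n)" by (rule sc_from_pattern[OF skQ fr])
  qed
next
  case False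
  hence nc: "\<forall>n. \<not> CYC Mu (Q n)" by blast
  show ?thesis
  proof (cases "\<forall>n. \<forall>v\<in>Mu. v \<noteq> m n \<longrightarrow> Q n (m n) v > 0")
    case True
    define R where "R f n \<longleftrightarrow> (\<forall>v\<in>Mu. (v \<noteq> m (Suc (Suc n)) \<longrightarrow> Q n f v > 0) \<and> (v = m (Suc (Suc n)) \<longrightarrow> Q n f v < 0))" for f n
    have srcT: "Qseq B m n (m n) v > 0" if "v \<in> Mu" "v \<noteq> m n" for n v using True that by blast
    have "\<forall>f\<in>V - Mu. \<exists>N. \<forall>n\<ge>N. R f n"
    proof
      fix f assume f: "f \<in> V - Mu"
      have fM: "f \<notin> Mu" using f by blast
      from acyc_row[OF skB c3 mMu fM abQ srcT nz0[OF f]]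
      show "\<exists>N. \<forall>n\<ge>N. R f n" unfolding R_def .
    qed
    from finite_eventually[where R=R, OF _ this] finV
    obtain N where N: "\<forall>n\<ge>N. \<forall>f\<in>V - Mu. R f n" by blast
    show ?thesis
    proof (intro exI[of _ N] allI impI)
      fix n assume "N \<le> n"
      hence "\<forall>v\<in>Mu. \<forall>f\<in>V - Mu. ((\<lambda>v. v \<noteq> m (Suc (Suc n))) v \<longrightarrow> Q n f v > 0) \<and> (\<not> (\<lambda>v. v \<noteq> m (Suc (Suc n))) v \<longrightarrow> Q n f v < 0)"
        using N unfolding R_def by auto
      thus "sign_coherent V Mu (Q n)" by (rule sc_from_pattern[OF skQ fr])
    qed
  next
    case F: False
    hence snk: "\<forall>n. \<forall>v\<in>Mu. v \<noteq> m n \<longrightarrow> Q n v (m n) > 0" using all_src_snk[OF nc] by blast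
    define B' where "B' = (\<lambda>i j. - B i j)"
    have skB': "skew B'" unfolding B'_def skew_def
    proof (intro allI)
      fix i j
      have "B i j = - B j i" using skB unfolding skew_def by blast
      thus "- B i j = - (- B j i)" by simp
    qed
    have QB': "Qseq B' m n = (\<lambda>i j. - Q n i j)" for n unfolding B'_def using Qseq_neg[OF skB] .
    have ab': "\<bar>Qseq B' m n i j\<bar> \<ge> 2" if "i \<in> Mu" "j \<in> Mu" "i \<noteq> j" for n i j
      unfolding QB' using abQ[OF that] by simp
    have src': "Qseq B' m n (m n) v > 0" if "v \<in> Mu" "v \<noteq> m n" for n v
    proof -
      have "Q n v (m n) > 0" using snk that by blast
      thus ?thesis unfolding QB' using sw[of n v "m n"] by linarith
    qed
    define R where "R f n \<longleftrightarrow> (\<forall>v\<in>Mu. (v \<noteq> m (Suc (Suc n)) \<longrightarrow> Qseq B' m n f v > 0) \<and> (v = m (Suc (Suc n)) \<longrightarrow> Qseq B' m n f v < 0))" for f n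
    have "\<forall>f\<in>V - Mu. \<exists>N. \<forall>n\<ge>N. R f n"
    proof
      fix f assume f: "f \<in> V - Mu"
      have fM: "f \<notin> Mu" using f by blast
      have nz': "\<exists>v\<in>Mu. B' f v \<noteq> 0" using nz0[OF f] unfolding B'_def by simp
      from acyc_row[OF skB' c3 mMu fM ab' src' nz']
      show "\<exists>N. \<forall>n\<ge>N. R f n" unfolding R_def .
    qed
    from finite_eventually[where R=R, OF _ this] finV
    obtain N where N: "\<forall>n\<ge>N. \<forall>f\<in>V - Mu. R f n" by blast
    show ?thesis
    proof (intro exI[of _ N] allI impI)
      fix n assume "N \<le> n"
      hence "\<forall>v\<in>Mu. \<forall>f\<in>V - Mu. ((\<lambda>v. v = m (Suc (Suc n))) v \<longrightarrow> Q n f v > 0) \<and> (\<not> (\<lambda>v. v = m (Suc (Suc n))) v \<longrightarrow> Q n f v < 0)"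
        using N unfolding R_def QB' by auto
      thus "sign_coherent V Mu (Q n)" by (rule sc_from_pattern[OF skQ fr])
    qed
  qed
qed

end

theorem mainTheorem15:
  fixes V Mu :: "'v set" and B :: "'v \<Rightarrow> 'v \<Rightarrow> int" and m :: "nat \<Rightarrow> 'v"
  assumes "is_quiver V Mu B"
    and "connected_quiver V Mu B"
    and "card Mu = 3"
    and "V - Mu \<noteq> {}"
    and "mutation_abundant Mu (restrict_q Mu B)"
    and "\<forall>n. m n \<in> Mu"
    and "reduced_seq m"
    and "weakly_balanced Mu m"
    and "cycle_preserving_seq Mu B m"
  shows "\<exists>T. \<forall>j>T. sign_coherent V Mu (Qseq B m j)"
proof -
  interpret QS V Mu B m by (rule QS.intro) (fact assms)+
  obtain N where N: "\<forall>n\<ge>N. sign_coherent V Mu (Qseq B m n)" using main_ex by blast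
  show ?thesis
  proof (intro exI[of _ N] allI impI)
    fix j assume "N < j"
    thus "sign_coherent V Mu (Qseq B m j)" using N by simp
  qed
qed

end
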